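(* Assume that $\varphi$ satisfies Conditions (C1), (C2), (C3), (C4) described in the context and that $\Omega$ is bounded, connected and has a Lipschitz boundary. Then each bounded linear functional $\phi\in(\mathcal L(\Omega))^*$ can be represented in the form $$\phi(u)=\phi_0(\mathbf U)+k\,\langle u\rangle_\Omega,\qquad u\in\mathcal L(\Omega),$$ where $\mathbf U\in\Lambda(\Omega)$ is the coset containing $u$, $\phi_0\in(\Lambda(\Omega))^*$ is some functional, $k\in\mathbb C$ is some constant, and $\langle u\rangle_\Omega:=\frac{1}{\operatorname{mes}\Omega}\int_\Omega u\,dx$. Conversely, each pair $(\phi_0,k)$ with $\phi_0\in(\Lambda(\Omega))^*$, $k\in\mathbb C$, generates a bounded linear functional on $\mathcal L(\Omega)$ by this formula.
   Context: Let $d\ge 1$ and let $\Omega\subseteq\mathbb R^d$ be a domain. Functions are complex-valued. Let $a\in L_1(\mathbb R^d)$, $a\ge 0$, and suppose there is a non-empty ball $B_0$ centered at $0$ with $a(z)\ge c_0>0$ for a.e. $z\in B_0$. A real function $r$ on $[0,\infty)$ is almost increasing (resp. almost decreasing) with constant $\beta\ge1$ if $r(s)\le\beta r(t)$ (resp. $\beta r(s)\ge r(t)$) for all $0\le s\le t$. Let $\varphi:[0,\infty)\times\Omega\times\Omega\to[0,\infty)$. Conditions: (C1) for each $u\in L_{1,loc}(\Omega)$ the function $(x,y)\mapsto\varphi(|u(x)-u(y)|,x,y)$ is measurable on $\Omega\times\Omega$; (C2) for every $\varepsilon>0$ there is $\delta\in(0,1)$ such that $\varphi(\frac{s+t}{2},x,y)\le(1-\delta)\frac{\varphi(s,x,y)+\varphi(t,x,y)}{2}$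 for a.e. $(x,y)$ and all $s,t>0$ with $|s-t|\ge\varepsilon\max\{s,t\}$; (C3) there are constants $1<p_-\le p_+$ and $\beta\ge1$ such that for a.e. $(x,y)$ the function $t\mapsto\varphi(t,x,y)/t^{p_-}$ is almost increasing with constant $\beta$ and $t\mapsto\varphi(t,x,y)/t^{p_+}$ is almost decreasing with constant $\beta$; (C4) for a.e. $(x,y)$: $c_1^{-1}\le\varphi(1,x,y)\le c_1$ with a constant $c_1>0$, $\varphi(0,x,y)=0$, and $\varphi(t,x,y)>0$ for $t>0$. Define for $u\in L_{1,loc}(\Omega)$: $F(u)=\int_{\Omega\times\Omega}\varphi(|u(x)-u(y)|,x,y)\,a(x-y)\,dx\,dy\in[0,+\infty]$, $|u|_{p,\Omega}=\inf\{\lambda>0: F(u/\lambda)\le1\}$, $f(u)=|u|_{p,\Omega}+\|u\|_{L_{p_-}(\Omega)}$, $\mathcal L(\Omega)=\{u\in L_{p_-,loc}(\Omega): f(u)<+\infty\}$ normed by $f$. On $L_{1,loc}(\Omega)$ let $u\sim v$ iff $u-v$ is a.e. constant; $\Lambda(\Omega)$ is the space of cosets $\mathbf U$ with $|u|_{p,\Omega}<\infty$ for $u\in\mathbf U$, normed by $|\mathbf U|_{p,\Omega}:=|u|_{p,\Omega}$. *)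

theory Defs
  imports "HOL-Analysis.Analysis"
begin

text \<open>Ambient space: a Euclidean space 'a (playing the role of R^d, d = DIM('a) >= 1).\<close>

text \<open>Domain with Lipschitz boundary: near every boundary point, after choosing a unit
  direction e (i.e. a rotation of coordinates), Omega is the part of a ball lying strictly
  above the graph of a Lipschitz function defined on the hyperplane orthogonal to e.\<close>
definition lipschitz_boundary :: "'a::euclidean_space set \<Rightarrow> bool" where
  "lipschitz_boundary \<Omega> \<longleftrightarrow>
     (\<forall>x0\<in>frontier \<Omega>. \<exists>r>0. \<exists>e::'a. \<exists>g::'a \<Rightarrow> real. \<exists>L.
        norm e = 1 \<and> L-lipschitz_on {y. y \<bullet> e = 0} g \<and>
        \<Omega> \<inter> ball x0 r = {x \<in> ball x0 r. g (x - (x \<bullet> e) *\<^sub>R e) < x \<bullet> e})"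

definition almost_increasing :: "real \<Rightarrow> (real \<Rightarrow> real) \<Rightarrow> bool" where
  "almost_increasing \<beta> r \<longleftrightarrow> \<beta> \<ge> 1 \<and> (\<forall>s t. 0 < s \<longrightarrow> s \<le> t \<longrightarrow> r s \<le> \<beta> * r t)"

definition almost_decreasing :: "real \<Rightarrow> (real \<Rightarrow> real) \<Rightarrow> bool" where
  "almost_decreasing \<beta> r \<longleftrightarrow> \<beta> \<ge> 1 \<and> (\<forall>s t. 0 < s \<longrightarrow> s \<le> t \<longrightarrow> \<beta> * r s \<ge> r t)"

definition L1loc :: "'a::euclidean_space set \<Rightarrow> ('a \<Rightarrow> complex) set" where
  "L1loc \<Omega> = {u. set_borel_measurable lebesgue \<Omega> u \<and>
      (\<forall>K. compact K \<and> K \<subseteq> \<Omega> \<longrightarrow> set_integrable lebesgue K u)}"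

definition Lploc :: "real \<Rightarrow> 'a::euclidean_space set \<Rightarrow> ('a \<Rightarrow> complex) set" where
  "Lploc p \<Omega> = {u. set_borel_measurable lebesgue \<Omega> u \<and>
      (\<forall>K. compact K \<and> K \<subseteq> \<Omega> \<longrightarrow>
          (\<integral>\<^sup>+x\<in>K. ennreal (cmod (u x) powr p) \<partial>lebesgue) < \<infinity>)}"

definition cond_C1 :: "(real \<Rightarrow> 'a \<Rightarrow> 'a \<Rightarrow> real) \<Rightarrow> 'a::euclidean_space set \<Rightarrow> bool" where
  "cond_C1 \<phi> \<Omega> \<longleftrightarrow> (\<forall>u\<in>L1loc \<Omega>.
     set_borel_measurable lebesgue (\<Omega> \<times> \<Omega>)
       (\<lambda>z. \<phi> (cmod (u (fst z) - u (snd z))) (fst z) (snd z)))"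

definition cond_C2 :: "(real \<Rightarrow> 'a \<Rightarrow> 'a \<Rightarrow> real) \<Rightarrow> 'a::euclidean_space set \<Rightarrow> bool" where
  "cond_C2 \<phi> \<Omega> \<longleftrightarrow> (\<forall>\<epsilon>>0. \<exists>\<delta>. 0 < \<delta> \<and> \<delta> < 1 \<and>
     (AE z in lebesgue. z \<in> \<Omega> \<times> \<Omega> \<longrightarrow>
        (\<forall>s t. 0 < s \<longrightarrow> 0 < t \<longrightarrow> \<bar>s - t\<bar> \<ge> \<epsilon> * max s t \<longrightarrow>
           \<phi> ((s + t) / 2) (fst z) (snd z)
             \<le> (1 - \<delta>) * ((\<phi> s (fst z) (snd z) + \<phi> t (fst z) (snd z)) / 2))))"

definition cond_C3 :: "(real \<Rightarrow> 'a \<Rightarrow> 'a \<Rightarrow> real) \<Rightarrow> 'a::euclidean_space set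
     \<Rightarrow> real \<Rightarrow> real \<Rightarrow> real \<Rightarrow> bool" where
  "cond_C3 \<phi> \<Omega> pm pp \<beta> \<longleftrightarrow> 1 < pm \<and> pm \<le> pp \<and> \<beta> \<ge> 1 \<and>
     (AE z in lebesgue. z \<in> \<Omega> \<times> \<Omega> \<longrightarrow>
        almost_increasing \<beta> (\<lambda>t. \<phi> t (fst z) (snd z) / t powr pm) \<and>
        almost_decreasing \<beta> (\<lambda>t. \<phi> t (fst z) (snd z) / t powr pp))"

definition cond_C4 :: "(real \<Rightarrow> 'a \<Rightarrow> 'a \<Rightarrow> real) \<Rightarrow> 'a::euclidean_space set \<Rightarrow> bool" where
  "cond_C4 \<phi> \<Omega> \<longleftrightarrow> (\<exists>c1>0.
     (AE z in lebesgue. z \<in> \<Omega> \<times> \<Omega> \<longrightarrow>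
        inverse c1 \<le> \<phi> 1 (fst z) (snd z) \<and> \<phi> 1 (fst z) (snd z) \<le> c1 \<and>
        \<phi> 0 (fst z) (snd z) = 0 \<and> (\<forall>t>0. \<phi> t (fst z) (snd z) > 0)))"

definition Fmod :: "(real \<Rightarrow> 'a \<Rightarrow> 'a \<Rightarrow> real) \<Rightarrow> ('a::euclidean_space \<Rightarrow> real) \<Rightarrow> 'a set
     \<Rightarrow> ('a \<Rightarrow> complex) \<Rightarrow> ennreal" where
  "Fmod \<phi> a \<Omega> u = (\<integral>\<^sup>+z\<in>\<Omega> \<times> \<Omega>.
      ennreal (\<phi> (cmod (u (fst z) - u (snd z))) (fst z) (snd z) * a (fst z - snd z)) \<partial>lebesgue)"

text \<open>|u|_{p,Omega} = inf {lambda > 0. F(u/lambda) <= 1}, with inf of the empty set = +infinity.\<close>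
definition pnorm :: "(real \<Rightarrow> 'a \<Rightarrow> 'a \<Rightarrow> real) \<Rightarrow> ('a::euclidean_space \<Rightarrow> real) \<Rightarrow> 'a set
     \<Rightarrow> ('a \<Rightarrow> complex) \<Rightarrow> ereal" where
  "pnorm \<phi> a \<Omega> u = Inf {ereal l | l. l > 0 \<and> Fmod \<phi> a \<Omega> (\<lambda>x. u x / complex_of_real l) \<le> 1}"

text \<open>The integral of |u|^p over Omega, and the L_p(Omega) norm (meaningful when finite).\<close>
definition Lp_integral :: "real \<Rightarrow> 'a::euclidean_space set \<Rightarrow> ('a \<Rightarrow> complex) \<Rightarrow> ennreal" where
  "Lp_integral p \<Omega> u = (\<integral>\<^sup>+x\<in>\<Omega>. ennreal (cmod (u x) powr p) \<partial>lebesgue)"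

definition Lp_norm :: "real \<Rightarrow> 'a::euclidean_space set \<Rightarrow> ('a \<Rightarrow> complex) \<Rightarrow> real" where
  "Lp_norm p \<Omega> u = enn2real (Lp_integral p \<Omega> u) powr (1 / p)"

definition Lspace :: "(real \<Rightarrow> 'a \<Rightarrow> 'a \<Rightarrow> real) \<Rightarrow> ('a::euclidean_space \<Rightarrow> real) \<Rightarrow> 'a set
     \<Rightarrow> real \<Rightarrow> ('a \<Rightarrow> complex) set" where
  "Lspace \<phi> a \<Omega> pm = {u. u \<in> Lploc pm \<Omega> \<and> pnorm \<phi> a \<Omega> u < \<infinity> \<and> Lp_integral pm \<Omega> u < \<infinity>}"

definition fnorm :: "(real \<Rightarrow> 'a \<Rightarrow> 'a \<Rightarrow> real) \<Rightarrow> ('a::euclidean_space \<Rightarrow> real) \<Rightarrow> 'a set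
     \<Rightarrow> real \<Rightarrow> ('a \<Rightarrow> complex) \<Rightarrow> real" where
  "fnorm \<phi> a \<Omega> pm u = real_of_ereal (pnorm \<phi> a \<Omega> u) + Lp_norm pm \<Omega> u"

definition coset_of :: "'a::euclidean_space set \<Rightarrow> ('a \<Rightarrow> complex) \<Rightarrow> ('a \<Rightarrow> complex) set" where
  "coset_of \<Omega> u = {v \<in> L1loc \<Omega>. \<exists>c. AE x in lebesgue. x \<in> \<Omega> \<longrightarrow> v x - u x = c}"

definition Lambda_base :: "(real \<Rightarrow> 'a \<Rightarrow> 'a \<Rightarrow> real) \<Rightarrow> ('a::euclidean_space \<Rightarrow> real) \<Rightarrow> 'a set
     \<Rightarrow> ('a \<Rightarrow> complex) set" where
  "Lambda_base \<phi> a \<Omega> = {u \<in> L1loc \<Omega>. pnorm \<phi> a \<Omega> u < \<infinity>}"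

definition Lambda_space :: "(real \<Rightarrow> 'a \<Rightarrow> 'a \<Rightarrow> real) \<Rightarrow> ('a::euclidean_space \<Rightarrow> real) \<Rightarrow> 'a set
     \<Rightarrow> ('a \<Rightarrow> complex) set set" where
  "Lambda_space \<phi> a \<Omega> = coset_of \<Omega> ` Lambda_base \<phi> a \<Omega>"

definition dual_L :: "(real \<Rightarrow> 'a \<Rightarrow> 'a \<Rightarrow> real) \<Rightarrow> ('a::euclidean_space \<Rightarrow> real) \<Rightarrow> 'a set
     \<Rightarrow> real \<Rightarrow> (('a \<Rightarrow> complex) \<Rightarrow> complex) set" where
  "dual_L \<phi> a \<Omega> pm = {\<psi>.
     (\<forall>u v. u \<in> Lspace \<phi> a \<Omega> pm \<longrightarrow> v \<in> Lspace \<phi> a \<Omega> pm \<longrightarrow> (\<lambda>x. u x + v x) \<in> Lspace \<phi> a \<Omega> pm \<longrightarrow>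
        \<psi> (\<lambda>x. u x + v x) = \<psi> u + \<psi> v) \<and>
     (\<forall>c u. u \<in> Lspace \<phi> a \<Omega> pm \<longrightarrow> (\<lambda>x. c * u x) \<in> Lspace \<phi> a \<Omega> pm \<longrightarrow>
        \<psi> (\<lambda>x. c * u x) = c * \<psi> u) \<and>
     (\<exists>C. \<forall>u \<in> Lspace \<phi> a \<Omega> pm. cmod (\<psi> u) \<le> C * fnorm \<phi> a \<Omega> pm u)}"

text \<open>Bounded linear functionals on Lambda(Omega) (normed by |U|_{p,Omega} := |u|_{p,Omega}, u in U).
  Vector operations on cosets are those induced by representatives.\<close>
definition dual_Lambda :: "(real \<Rightarrow> 'a \<Rightarrow> 'a \<Rightarrow> real) \<Rightarrow> ('a::euclidean_space \<Rightarrow> real) \<Rightarrow> 'a set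
     \<Rightarrow> (('a \<Rightarrow> complex) set \<Rightarrow> complex) set" where
  "dual_Lambda \<phi> a \<Omega> = {\<psi>.
     (\<forall>u v. u \<in> Lambda_base \<phi> a \<Omega> \<longrightarrow> v \<in> Lambda_base \<phi> a \<Omega> \<longrightarrow> (\<lambda>x. u x + v x) \<in> Lambda_base \<phi> a \<Omega> \<longrightarrow>
        \<psi> (coset_of \<Omega> (\<lambda>x. u x + v x)) = \<psi> (coset_of \<Omega> u) + \<psi> (coset_of \<Omega> v)) \<and>
     (\<forall>c u. u \<in> Lambda_base \<phi> a \<Omega> \<longrightarrow> (\<lambda>x. c * u x) \<in> Lambda_base \<phi> a \<Omega> \<longrightarrow>
        \<psi> (coset_of \<Omega> (\<lambda>x. c * u x)) = c * \<psi> (coset_of \<Omega> u)) \<and>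
     (\<exists>C. \<forall>u \<in> Lambda_base \<phi> a \<Omega>. cmod (\<psi> (coset_of \<Omega> u)) \<le> C * real_of_ereal (pnorm \<phi> a \<Omega> u))}"

definition mean_val :: "'a::euclidean_space set \<Rightarrow> ('a \<Rightarrow> complex) \<Rightarrow> complex" where
  "mean_val \<Omega> u = complex_of_real (1 / measure lebesgue \<Omega>) * (LINT x:\<Omega>|lebesgue. u x)"

end

theory Submission
  imports Defs
begin


lemma borel_prod_meas_eq: "borel_measurable (lborel \<Otimes>\<^sub>M lborel) = borel_measurable (borel :: ('a::euclidean_space \<times> 'b::euclidean_space) measure)"
  by (simp add: lborel_prod)

lemma lebesgue_prod_nn:
  fixes f :: "'a::euclidean_space \<times> 'b::euclidean_space \<Rightarrow> ennreal"
  assumes "f \<in> borel_measurable borel"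
  shows "(\<integral>\<^sup>+z. f z \<partial>lebesgue) = (\<integral>\<^sup>+x. \<integral>\<^sup>+y. f (x,y) \<partial>lborel \<partial>lborel)"
proof -
  have "(\<integral>\<^sup>+z. f z \<partial>lebesgue) = (\<integral>\<^sup>+z. f z \<partial>(lborel::('a\<times>'b) measure))"
    by (rule nn_integral_completion)
  also have "\<dots> = (\<integral>\<^sup>+z. f z \<partial>(lborel \<Otimes>\<^sub>M lborel))" by (simp add: lborel_prod)
  also have "\<dots> = (\<integral>\<^sup>+x. \<integral>\<^sup>+y. f (x,y) \<partial>lborel \<partial>lborel)"
    using assms by (intro lborel.nn_integral_fst[symmetric]) (simp add: lborel_prod)
  finally show ?thesis .
qed

lemma null_fst:
  fixes N :: "'a::euclidean_space set"
  assumes "N \<in> null_sets lebesgue"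
  shows "{z::'a\<times>'b::euclidean_space. fst z \<in> N} \<in> null_sets lebesgue"
proof -
  obtain N' where N': "N' \<in> null_sets lborel" "N \<subseteq> N'"
    using assms unfolding null_sets_completion_iff2 by (elim bexE) (rule that)
  have "N' \<times> (UNIV::'b set) \<in> null_sets (lborel \<Otimes>\<^sub>M lborel)"
    using N' by (intro lborel.times_in_null_sets1) simp_all
  then have "N' \<times> (UNIV::'b set) \<in> null_sets lborel" by (simp only: lborel_prod)
  moreover have "{z::'a\<times>'b. fst z \<in> N} \<subseteq> N' \<times> UNIV" using N' by auto
  ultimately show ?thesis unfolding null_sets_completion_iff2 by (intro bexI)
qed

lemma null_snd:
  fixes N :: "'b::euclidean_space set"
  assumes "N \<in> null_sets lebesgue"
  shows "{z::'a::euclidean_space\<times>'b. snd z \<in> N} \<in> null_sets lebesgue"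
proof -
  obtain N' where N': "N' \<in> null_sets lborel" "N \<subseteq> N'"
    using assms unfolding null_sets_completion_iff2 by (elim bexE) (rule that)
  have "(UNIV::'a set) \<times> N' \<in> null_sets (lborel \<Otimes>\<^sub>M lborel)"
    using N' by (intro lborel.times_in_null_sets2) simp_all
  then have "(UNIV::'a set) \<times> N' \<in> null_sets lborel" by (simp only: lborel_prod)
  moreover have "{z::'a\<times>'b. snd z \<in> N} \<subseteq> UNIV \<times> N'" using N' by auto
  ultimately show ?thesis unfolding null_sets_completion_iff2 by (intro bexI)
qed

lemma AE_fst:
  assumes "AE x in (lebesgue::'a::euclidean_space measure). P x"
  shows "AE z in (lebesgue::('a\<times>'b::euclidean_space) measure). P (fst z)"
proof -
  obtain N where N: "{x. \<not> P x} \<subseteq> N" "N \<in> null_sets lebesgue"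
    using assms by (auto simp: eventually_ae_filter)
  show ?thesis
    by (rule AE_I'[OF null_fst[OF N(2)]]) (use N in auto)
qed

lemma AE_snd:
  assumes "AE x in (lebesgue::'b::euclidean_space measure). P x"
  shows "AE z in (lebesgue::('a::euclidean_space\<times>'b) measure). P (snd z)"
proof -
  obtain N where N: "{x. \<not> P x} \<subseteq> N" "N \<in> null_sets lebesgue"
    using assms by (auto simp: eventually_ae_filter)
  show ?thesis
    by (rule AE_I'[OF null_snd[OF N(2)]]) (use N in auto)
qed

lemma AE_diff:
  assumes "AE x in (lebesgue::'a::euclidean_space measure). P x"
  shows "AE z in (lebesgue::('a\<times>'a) measure). P (fst z - snd z)"
proof -
  obtain N where N: "{x. \<not> P x} \<subseteq> N" "N \<in> null_sets lebesgue"
    using assms by (auto simp: eventually_ae_filter)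
  obtain N' where N': "N' \<in> null_sets lborel" "N \<subseteq> N'"
    using N(2) unfolding null_sets_completion_iff2 by (elim bexE) (rule that)
  define S where "S = {z::'a\<times>'a. fst z - snd z \<in> N'}"
  have Sm: "S \<in> sets (lborel \<Otimes>\<^sub>M lborel)"
  proof -
    have "(\<lambda>z::'a\<times>'a. fst z - snd z) \<in> borel_measurable borel" by (intro borel_measurable_continuous_onI continuous_intros)
    then have "(\<lambda>z::'a\<times>'a. fst z - snd z) -` N' \<in> sets borel"
      using N' by (auto simp: null_sets_def measurable_def)
    then show ?thesis by (subst lborel_prod) (simp add: S_def vimage_def)
  qed
  have "emeasure (lborel \<Otimes>\<^sub>M lborel) S = (\<integral>\<^sup>+y. emeasure lborel ((\<lambda>x. (x,y)) -` S) \<partial>lborel)"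
    using Sm by (rule lborel_pair.emeasure_pair_measure_alt2)
  also have "\<dots> = (\<integral>\<^sup>+y. 0 \<partial>(lborel::'a measure))"
  proof (rule nn_integral_cong)
    fix y :: 'a assume "y \<in> space lborel"
    have "(\<lambda>x. (x,y)) -` S = {x. x - y \<in> N'}" by (auto simp: S_def)
    then show "emeasure lborel ((\<lambda>x. (x,y)) -` S) = 0"
      using null_sets_translation[OF N'(1), of y] by auto
  qed
  finally have "S \<in> null_sets (lborel \<Otimes>\<^sub>M lborel)" using Sm by auto
  then have "S \<in> null_sets lborel" by (simp add: lborel_prod)
  then have "S \<in> null_sets lebesgue" by (rule null_sets_completionI)
  show ?thesis
    by (rule AE_I'[OF \<open>S \<in> null_sets lebesgue\<close>]) (use N N' in \<open>auto simp: S_def\<close>)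
qed



lemma borel_version:
  fixes u :: "'a::euclidean_space \<Rightarrow> complex"
  assumes "set_borel_measurable lebesgue \<Omega> u"
  shows "\<exists>g\<in>borel_measurable borel. AE x in lborel. x \<in> \<Omega> \<longrightarrow> u x = g x"
proof -
  define h where "h = (\<lambda>x. indicator \<Omega> x *\<^sub>R u x)"
  have hm: "h \<in> borel_measurable lebesgue" using assms by (simp add: h_def set_borel_measurable_def)
  have "(\<lambda>x. Re (h x)) \<in> borel_measurable (completion lborel)" using hm by measurable
  then obtain gr where gr: "gr \<in> borel_measurable lborel" "AE x in lborel. Re (h x) = gr x"
    using completion_ex_borel_measurable_real by blast
  have "(\<lambda>x. Im (h x)) \<in> borel_measurable (completion lborel)" using hm by measurable
  then obtain gi where gi: "gi \<in> borel_measurable lborel" "AE x in lborel. Im (h x) = gi x"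
    using completion_ex_borel_measurable_real by blast
  define g where "g = (\<lambda>x. Complex (gr x) (gi x))"
  have "g \<in> borel_measurable lborel" unfolding g_def using gr gi
    by (subst borel_measurable_complex_iff) auto
  then have "g \<in> borel_measurable borel" by simp
  moreover have "AE x in lborel. x \<in> \<Omega> \<longrightarrow> u x = g x"
    using gr(2) gi(2) by eventually_elim (auto simp: g_def h_def complex_eq_iff)
  ultimately show ?thesis by blast
qed

lemma pow_tri:
  fixes a b c :: complex and p :: real
  assumes "p \<ge> 0"
  shows "cmod (a - b) powr p \<le> 2 powr p * (cmod (a - c) powr p + cmod (c - b) powr p)"
proof -
  define m where "m = max (cmod (a - c)) (cmod (c - b))"
  have "cmod (a - b) \<le> cmod (a - c) + cmod (c - b)"
    using norm_triangle_ineq[of "a - c" "c - b"] by simp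
  also have "\<dots> \<le> 2 * m" by (simp add: m_def)
  finally have "cmod (a - b) powr p \<le> (2 * m) powr p"
    using assms by (intro powr_mono2) auto
  also have "\<dots> = 2 powr p * m powr p" by (simp add: powr_mult m_def)
  also have "m powr p \<le> cmod (a - c) powr p + cmod (c - b) powr p"
    by (simp add: m_def max_def)
  finally show ?thesis by simp
qed

definition Gf :: "real \<Rightarrow> ('a::euclidean_space \<Rightarrow> complex) \<Rightarrow> 'a set \<Rightarrow> 'a set \<Rightarrow> ennreal" where
  "Gf p f A B = (\<integral>\<^sup>+x. \<integral>\<^sup>+y. indicator A x * indicator B y * ennreal (cmod (f x - f y) powr p) \<partial>lborel \<partial>lborel)"

lemma G_tri:
  fixes f :: "'a::euclidean_space \<Rightarrow> complex"
  assumes f[measurable]: "f \<in> borel_measurable borel"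
    and [measurable]: "A \<in> sets borel" "B \<in> sets borel" "D \<in> sets borel" and p: "p \<ge> 0"
  shows "emeasure lborel D * Gf p f A B
    \<le> ennreal (2 powr p) * (emeasure lborel B * Gf p f A D + emeasure lborel A * Gf p f D B)"
proof -
  define d where "d = (\<lambda>x y. ennreal (cmod (f x - f y) powr p))"
  have dm[measurable]: "(\<lambda>(x,y). d x y) \<in> borel_measurable (lborel \<Otimes>\<^sub>M lborel)" unfolding d_def by measurable
  define c where "c = ennreal (2 powr p)"
  have L: "emeasure lborel D * Gf p f A B = (\<integral>\<^sup>+x. \<integral>\<^sup>+y. \<integral>\<^sup>+z. indicator A x * indicator B y * indicator D z * d x y \<partial>lborel \<partial>lborel \<partial>lborel)"
  proof -
    have "(\<integral>\<^sup>+x. \<integral>\<^sup>+y. \<integral>\<^sup>+z. indicator A x * indicator B y * indicator D z * d x y \<partial>lborel \<partial>lborel \<partial>lborel)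
       = (\<integral>\<^sup>+x. \<integral>\<^sup>+y. (indicator A x * indicator B y * d x y) * emeasure lborel D \<partial>lborel \<partial>lborel)"
    proof (intro nn_integral_cong)
      fix x y
      have "(\<integral>\<^sup>+z. (indicator A x * indicator B y * d x y) * indicator D z \<partial>lborel) = (indicator A x * indicator B y * d x y) * emeasure lborel D"
        by (simp add: nn_integral_cmult_indicator)
      then show "(\<integral>\<^sup>+z. indicator A x * indicator B y * indicator D z * d x y \<partial>lborel) = (indicator A x * indicator B y * d x y) * emeasure lborel D"
        by (simp add: mult_ac)
    qed
    also have "\<dots> = (\<integral>\<^sup>+x. (\<integral>\<^sup>+y. indicator A x * indicator B y * d x y \<partial>lborel) * emeasure lborel D \<partial>lborel)"
      by (intro nn_integral_cong nn_integral_multc) (simp add: d_def)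
    also have "\<dots> = (\<integral>\<^sup>+x. \<integral>\<^sup>+y. indicator A x * indicator B y * d x y \<partial>lborel \<partial>lborel) * emeasure lborel D"
      by (intro nn_integral_multc) (simp add: d_def)
    finally show ?thesis by (simp add: Gf_def d_def mult.commute)
  qed
  have "(\<integral>\<^sup>+x. \<integral>\<^sup>+y. \<integral>\<^sup>+z. indicator A x * indicator B y * indicator D z * d x y \<partial>lborel \<partial>lborel \<partial>lborel)
     \<le> (\<integral>\<^sup>+x. \<integral>\<^sup>+y. \<integral>\<^sup>+z. c * (indicator A x * indicator B y * indicator D z * d x z)
            + c * (indicator A x * indicator B y * indicator D z * d z y) \<partial>lborel \<partial>lborel \<partial>lborel)"
  proof (intro nn_integral_mono)
    fix x y z
    have "d x y \<le> c * (d x z + d z y)"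
      unfolding d_def c_def using pow_tri[OF p, of "f x" "f y" "f z"]
      by (simp add: ennreal_mult'[symmetric] ennreal_plus[symmetric] del: ennreal_plus)
    then have "indicator A x * indicator B y * indicator D z * d x y
        \<le> indicator A x * indicator B y * indicator D z * (c * (d x z + d z y))"
      by (intro mult_left_mono) auto
    then show "indicator A x * indicator B y * indicator D z * d x y
        \<le> c * (indicator A x * indicator B y * indicator D z * d x z) + c * (indicator A x * indicator B y * indicator D z * d z y)"
      by (simp add: distrib_left mult_ac)
  qed
  also have "\<dots> = c * (\<integral>\<^sup>+x. \<integral>\<^sup>+y. \<integral>\<^sup>+z. indicator A x * indicator B y * indicator D z * d x z \<partial>lborel \<partial>lborel \<partial>lborel)
       + c * (\<integral>\<^sup>+x. \<integral>\<^sup>+y. \<integral>\<^sup>+z. indicator A x * indicator B y * indicator D z * d z y \<partial>lborel \<partial>lborel \<partial>lborel)"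
  proof -
    have "(\<integral>\<^sup>+x. \<integral>\<^sup>+y. \<integral>\<^sup>+z. c * (indicator A x * indicator B y * indicator D z * d x z)
            + c * (indicator A x * indicator B y * indicator D z * d z y) \<partial>lborel \<partial>lborel \<partial>lborel)
       = (\<integral>\<^sup>+x. \<integral>\<^sup>+y. c * (\<integral>\<^sup>+z. indicator A x * indicator B y * indicator D z * d x z \<partial>lborel)
            + c * (\<integral>\<^sup>+z. indicator A x * indicator B y * indicator D z * d z y \<partial>lborel) \<partial>lborel \<partial>lborel)"
      by (intro nn_integral_cong) (simp add: nn_integral_add nn_integral_cmult)
    also have "\<dots> = (\<integral>\<^sup>+x. c * (\<integral>\<^sup>+y. \<integral>\<^sup>+z. indicator A x * indicator B y * indicator D z * d x z \<partial>lborel \<partial>lborel)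
            + c * (\<integral>\<^sup>+y. \<integral>\<^sup>+z. indicator A x * indicator B y * indicator D z * d z y \<partial>lborel \<partial>lborel) \<partial>lborel)"
      by (intro nn_integral_cong) (simp add: nn_integral_add nn_integral_cmult)
    also have "\<dots> = c * (\<integral>\<^sup>+x. \<integral>\<^sup>+y. \<integral>\<^sup>+z. indicator A x * indicator B y * indicator D z * d x z \<partial>lborel \<partial>lborel \<partial>lborel)
       + c * (\<integral>\<^sup>+x. \<integral>\<^sup>+y. \<integral>\<^sup>+z. indicator A x * indicator B y * indicator D z * d z y \<partial>lborel \<partial>lborel \<partial>lborel)"
      by (simp add: nn_integral_add nn_integral_cmult)
    finally show ?thesis .
  qed
  also have "(\<integral>\<^sup>+x. \<integral>\<^sup>+y. \<integral>\<^sup>+z. indicator A x * indicator B y * indicator D z * d x z \<partial>lborel \<partial>lborel \<partial>lborel)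
      = emeasure lborel B * Gf p f A D"
  proof -
    have "(\<integral>\<^sup>+x. \<integral>\<^sup>+y. \<integral>\<^sup>+z. indicator A x * indicator B y * indicator D z * d x z \<partial>lborel \<partial>lborel \<partial>lborel)
       = (\<integral>\<^sup>+x. \<integral>\<^sup>+y. (\<integral>\<^sup>+z. indicator A x * indicator D z * d x z \<partial>lborel) * indicator B y \<partial>lborel \<partial>lborel)"
    proof (intro nn_integral_cong)
      fix x y
      have "(\<integral>\<^sup>+z. indicator B y * (indicator A x * indicator D z * d x z) \<partial>lborel) = indicator B y * (\<integral>\<^sup>+z. indicator A x * indicator D z * d x z \<partial>lborel)"
        by (rule nn_integral_cmult) (simp add: d_def)
      then show "(\<integral>\<^sup>+z. indicator A x * indicator B y * indicator D z * d x z \<partial>lborel) = (\<integral>\<^sup>+z. indicator A x * indicator D z * d x z \<partial>lborel) * indicator B y"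
        by (simp add: mult_ac)
    qed
    also have "\<dots> = (\<integral>\<^sup>+x. (\<integral>\<^sup>+z. indicator A x * indicator D z * d x z \<partial>lborel) * emeasure lborel B \<partial>lborel)"
      by (intro nn_integral_cong) (simp add: nn_integral_cmult_indicator)
    also have "\<dots> = Gf p f A D * emeasure lborel B"
      by (simp add: nn_integral_multc Gf_def d_def)
    finally show ?thesis by (simp add: mult.commute)
  qed
  also have "(\<integral>\<^sup>+x. \<integral>\<^sup>+y. \<integral>\<^sup>+z. indicator A x * indicator B y * indicator D z * d z y \<partial>lborel \<partial>lborel \<partial>lborel)
      = emeasure lborel A * Gf p f D B"
  proof -
    have "(\<integral>\<^sup>+x. \<integral>\<^sup>+y. \<integral>\<^sup>+z. indicator A x * indicator B y * indicator D z * d z y \<partial>lborel \<partial>lborel \<partial>lborel)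
       = (\<integral>\<^sup>+x. (\<integral>\<^sup>+y. \<integral>\<^sup>+z. indicator B y * indicator D z * d z y \<partial>lborel \<partial>lborel) * indicator A x \<partial>lborel)"
    proof (intro nn_integral_cong)
      fix x
      have "(\<integral>\<^sup>+y. \<integral>\<^sup>+z. indicator A x * (indicator B y * indicator D z * d z y) \<partial>lborel \<partial>lborel)
         = (\<integral>\<^sup>+y. indicator A x * (\<integral>\<^sup>+z. indicator B y * indicator D z * d z y \<partial>lborel) \<partial>lborel)"
        by (intro nn_integral_cong nn_integral_cmult) (simp add: d_def)
      also have "\<dots> = indicator A x * (\<integral>\<^sup>+y. \<integral>\<^sup>+z. indicator B y * indicator D z * d z y \<partial>lborel \<partial>lborel)"
        by (rule nn_integral_cmult) (simp add: d_def)
      finally show "(\<integral>\<^sup>+y. \<integral>\<^sup>+z. indicator A x * indicator B y * indicator D z * d z y \<partial>lborel \<partial>lborel) = (\<integral>\<^sup>+y. \<integral>\<^sup>+z. indicator B y * indicator D z * d z y \<partial>lborel \<partial>lborel) * indicator A x"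
        by (simp add: mult_ac)
    qed
    also have "\<dots> = (\<integral>\<^sup>+y. \<integral>\<^sup>+z. indicator B y * indicator D z * d z y \<partial>lborel \<partial>lborel) * emeasure lborel A"
      by (simp add: nn_integral_cmult_indicator)
    also have "(\<integral>\<^sup>+y. \<integral>\<^sup>+z. indicator B y * indicator D z * d z y \<partial>lborel \<partial>lborel)
        = (\<integral>\<^sup>+z. \<integral>\<^sup>+y. indicator D z * indicator B y * d z y \<partial>lborel \<partial>lborel)"
    proof -
      have "case_prod (\<lambda>z y. indicator D z * indicator B y * d z y) \<in> borel_measurable (lborel \<Otimes>\<^sub>M lborel)"
        by measurable
      from lborel_pair.Fubini'[OF this] show ?thesis by (simp add: mult_ac)
    qed
    finally show ?thesis by (simp add: Gf_def d_def mult.commute)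
  qed
  finally show ?thesis using L by (simp add: c_def distrib_left)
qed



definition Nf :: "real \<Rightarrow> real \<Rightarrow> ('a::euclidean_space \<Rightarrow> complex) \<Rightarrow> 'a set \<Rightarrow> ennreal" where
  "Nf p \<rho> f \<Omega> = (\<integral>\<^sup>+x. \<integral>\<^sup>+y. indicator \<Omega> x * indicator \<Omega> y * indicator (ball x \<rho>) y
      * ennreal (cmod (f x - f y) powr p) \<partial>lborel \<partial>lborel)"

lemma finite_ball_cover:
  fixes \<Omega> :: "'a::euclidean_space set"
  assumes "bounded \<Omega>" "r > 0"
  obtains C where "C \<subseteq> \<Omega>" "finite C" "\<Omega> \<subseteq> (\<Union>c\<in>C. ball c r)"
proof -
  have cpt: "compact (closure \<Omega>)" using assms by (simp add: compact_closure)
  have cov: "closure \<Omega> \<subseteq> (\<Union>c\<in>\<Omega>. ball c r)"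
  proof
    fix x assume "x \<in> closure \<Omega>"
    then obtain c where "c \<in> \<Omega>" "dist c x < r" using assms(2) closure_approachable by blast
    then show "x \<in> (\<Union>c\<in>\<Omega>. ball c r)" by auto
  qed
  obtain C where "C \<subseteq> \<Omega>" "finite C" "closure \<Omega> \<subseteq> (\<Union>c\<in>C. ball c r)"
    by (rule compactE_image[OF cpt _ cov]) auto
  then show ?thesis using closure_subset[of \<Omega>] that by (meson subset_trans)
qed

lemma pos_measure_open_piece:
  fixes \<Omega> :: "'a::euclidean_space set"
  assumes "open \<Omega>" "c \<in> \<Omega>" "r > 0"
  shows "0 < emeasure lborel (\<Omega> \<inter> ball c r)"
proof -
  obtain e where e: "e > 0" "ball c e \<subseteq> \<Omega>" using assms open_contains_ball by blast
  have "ball c (min e r) \<subseteq> \<Omega> \<inter> ball c r" using e by auto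
  moreover have "0 < emeasure lborel (ball c (min e r))"
  proof -
    have "emeasure lborel (ball c (min e r)) = ennreal (measure lborel (ball c (min e r)))"
      using emeasure_lborel_ball_finite[of c "min e r"] by (simp add: emeasure_eq_ennreal_measure)
    moreover have "0 < measure lborel (ball c (min e r))" using e assms by simp
    ultimately show ?thesis by simp
  qed
  moreover have "\<Omega> \<inter> ball c r \<in> sets lborel" using assms by simp
  ultimately show ?thesis
    using emeasure_mono[of "ball c (min e r)" "\<Omega> \<inter> ball c r" lborel] order.strict_trans2 by blast
qed


lemma chain:
  fixes \<Omega> :: "'a::euclidean_space set"
  assumes \<Omega>: "open \<Omega>" "connected \<Omega>" "bounded \<Omega>" and \<rho>: "\<rho> > 0" and p: "p \<ge> 0"
  shows "\<exists>K::ennreal. K < \<infinity> \<and> (\<forall>f \<in> borel_measurable borel. Gf p f \<Omega> \<Omega> \<le> K * Nf p \<rho> f \<Omega>)"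
proof -
  define r where "r = \<rho> / 4"
  have r: "r > 0" using \<rho> by (simp add: r_def)
  obtain C where C: "C \<subseteq> \<Omega>" "finite C" "\<Omega> \<subseteq> (\<Union>c\<in>C. ball c r)"
    using finite_ball_cover[OF \<Omega>(3) r] by blast
  define A where "A c = \<Omega> \<inter> ball c r" for c
  have \<Omega>m[measurable]: "\<Omega> \<in> sets borel" using \<Omega>(1) by simp
  have Am[measurable]: "A c \<in> sets borel" for c using \<Omega>(1) by (simp add: A_def)
  have Aopen: "open (A c)" for c using \<Omega>(1) by (simp add: A_def open_Int)
  have Apos: "0 < emeasure lborel (A c)" if "c \<in> C" for c
    using pos_measure_open_piece[OF \<Omega>(1) _ r, of c] that C(1) by (auto simp: A_def)
  have Afin: "emeasure lborel (A c) < \<infinity>" for c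
  proof -
    have "emeasure lborel (A c) \<le> emeasure lborel (ball c r)"
      by (intro emeasure_mono) (auto simp: A_def)
    then show ?thesis using emeasure_lborel_ball_finite[of c r] by (meson le_less_trans)
  qed
  have cA: "c \<in> A c" if "c \<in> C" for c using that C(1) r by (auto simp: A_def)
  define R where "R = {(c,c'). c \<in> C \<and> c' \<in> C \<and> A c \<inter> A c' \<noteq> {}}"
  have Rsub: "R \<subseteq> C \<times> C" by (auto simp: R_def)
  have Rfin: "finite R" using Rsub C(2) finite_subset by blast
  have Rrefl: "(c,c) \<in> R" if "c \<in> C" for c using cA[OF that] that by (auto simp: R_def)
  have Rnear: "dist x y < \<rho>" if cc: "(c,c') \<in> R" "x \<in> A c" "y \<in> A c'" for c c' x y
  proof -
    obtain w where w: "w \<in> A c" "w \<in> A c'" using cc(1) unfolding R_def by blast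
    have "dist x c < r" "dist c w < r" "dist w c' < r" "dist c' y < r"
      using cc(2,3) w by (auto simp: A_def dist_commute)
    moreover have "dist x y \<le> dist x c + dist c w + dist w c' + dist c' y"
      using dist_triangle[of x y c] dist_triangle[of c y w] dist_triangle[of w y c'] by linarith
    ultimately show ?thesis by (simp add: r_def)
  qed
  define S where "S f = (\<Sum>cc\<in>R. Gf p f (A (fst cc)) (A (snd cc)))" for f
  have GleS: "Gf p f (A c) (A c') \<le> S f" if "(c,c') \<in> R" for f c c'
    unfolding S_def using member_le_sum[OF that _ Rfin, of "\<lambda>cc. Gf p f (A (fst cc)) (A (snd cc))"] by simp
  have reach: "(a,b) \<in> R\<^sup>*" if "a \<in> C" "b \<in> C" for a b
  proof (rule ccontr)
    assume nb: "(a,b) \<notin> R\<^sup>*"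
    define U where "U = (\<Union>c\<in>{c\<in>C. (a,c) \<in> R\<^sup>*}. A c)"
    define V where "V = (\<Union>c\<in>{c\<in>C. (a,c) \<notin> R\<^sup>*}. A c)"
    have "open U" unfolding U_def using Aopen by blast
    moreover have "open V" unfolding V_def using Aopen by blast
    moreover have "U \<inter> V \<inter> \<Omega> = {}"
    proof (rule ccontr)
      assume "U \<inter> V \<inter> \<Omega> \<noteq> {}"
      then obtain x c c' where "c \<in> C" "(a,c) \<in> R\<^sup>*" "x \<in> A c" "c' \<in> C" "(a,c') \<notin> R\<^sup>*" "x \<in> A c'"
        unfolding U_def V_def by blast
      then have "(c,c') \<in> R" by (auto simp: R_def)
      with \<open>(a,c) \<in> R\<^sup>*\<close> have "(a,c') \<in> R\<^sup>*" by (rule rtrancl_into_rtrancl)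
      with \<open>(a,c') \<notin> R\<^sup>*\<close> show False by blast
    qed
    moreover have "\<Omega> \<subseteq> U \<union> V"
    proof
      fix x assume "x \<in> \<Omega>"
      then obtain c where "c \<in> C" "x \<in> ball c r" using C(3) by blast
      then have "x \<in> A c" using \<open>x \<in> \<Omega>\<close> by (simp add: A_def)
      then show "x \<in> U \<union> V" using \<open>c \<in> C\<close> unfolding U_def V_def by blast
    qed
    ultimately have "U \<inter> \<Omega> = {} \<or> V \<inter> \<Omega> = {}" using connectedD[OF \<Omega>(2)] by blast
    moreover have "a \<in> U \<inter> \<Omega>" using that(1) cA C(1) unfolding U_def by blast
    moreover have "b \<in> V \<inter> \<Omega>" using that(2) cA C(1) nb unfolding V_def by blast
    ultimately show False by blast
  qed
  define c2 where "c2 = ennreal (2 powr p)"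
  have c2fin: "c2 < \<infinity>" by (simp add: c2_def)
  have bound: "\<exists>B. B < \<infinity> \<and> (\<forall>f\<in>borel_measurable borel. Gf p f (A a) (A b) \<le> B * S f)"
    if "a \<in> C" "(a,b) \<in> R\<^sup>*" for a b
    using that(2)
  proof (induction rule: rtrancl_induct)
    case base
    show ?case by (rule exI[of _ 1]) (use GleS Rrefl[OF that(1)] in auto)
  next
    case (step b b')
    from step.IH obtain B where B: "B < \<infinity>" "\<And>f. f\<in>borel_measurable borel \<Longrightarrow> Gf p f (A a) (A b) \<le> B * S f"
      by blast
    have bC: "b \<in> C" using step.hyps(2) by (auto simp: R_def)
    define B' where "B' = c2 * (emeasure lborel (A b') * B + emeasure lborel (A a)) / emeasure lborel (A b)"
    have "B' < \<infinity>"
    proof -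
      have "c2 * (emeasure lborel (A b') * B + emeasure lborel (A a)) < \<infinity>"
        using c2fin Afin B(1) by (simp add: ennreal_mult_less_top)
      then show ?thesis using Apos[OF bC] unfolding B'_def
        by (metis ennreal_divide_eq_top_iff less_top not_gr_zero infinity_ennreal_def)
    qed
    moreover have "Gf p f (A a) (A b') \<le> B' * S f" if f: "f \<in> borel_measurable borel" for f
    proof -
      have "emeasure lborel (A b) * Gf p f (A a) (A b')
          \<le> c2 * (emeasure lborel (A b') * Gf p f (A a) (A b) + emeasure lborel (A a) * Gf p f (A b) (A b'))"
        unfolding c2_def using G_tri[OF f Am Am Am p] .
      also have "\<dots> \<le> c2 * (emeasure lborel (A b') * (B * S f) + emeasure lborel (A a) * S f)"
        using B(2)[OF f] GleS[OF step.hyps(2), of f]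
        by (intro mult_left_mono add_mono) auto
      also have "\<dots> = (c2 * (emeasure lborel (A b') * B + emeasure lborel (A a))) * S f"
        by (simp add: algebra_simps)
      finally have *: "emeasure lborel (A b) * Gf p f (A a) (A b') \<le> (c2 * (emeasure lborel (A b') * B + emeasure lborel (A a))) * S f" .
      have "Gf p f (A a) (A b') = (Gf p f (A a) (A b') * emeasure lborel (A b)) / emeasure lborel (A b)"
        using Apos[OF bC] Afin[of b] by (simp add: mult_divide_eq_ennreal)
      also have "\<dots> \<le> ((c2 * (emeasure lborel (A b') * B + emeasure lborel (A a))) * S f) / emeasure lborel (A b)"
        using * by (intro divide_right_mono_ennreal) (simp add: mult.commute)
      also have "\<dots> = B' * S f" unfolding B'_def
        by (simp add: ennreal_times_divide ennreal_divide_times mult_ac)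
      finally show ?thesis .
    qed
    ultimately show ?case by blast
  qed
  have "\<forall>ab\<in>C\<times>C. \<exists>B. B < \<infinity> \<and> (\<forall>f\<in>borel_measurable borel. Gf p f (A (fst ab)) (A (snd ab)) \<le> B * S f)"
    using bound reach by auto
  then obtain Bf where Bf: "\<And>ab. ab \<in> C\<times>C \<Longrightarrow> Bf ab < \<infinity> \<and> (\<forall>f\<in>borel_measurable borel. Gf p f (A (fst ab)) (A (snd ab)) \<le> Bf ab * S f)"
    by metis
  define K where "K = (\<Sum>a\<in>C. \<Sum>b\<in>C. Bf (a,b)) * of_nat (card R)"
  have "K < \<infinity>" using Bf C(2) by (auto simp: K_def ennreal_mult_less_top of_nat_less_top)
  moreover have "Gf p f \<Omega> \<Omega> \<le> K * Nf p \<rho> f \<Omega>" if f[measurable]: "f \<in> borel_measurable borel" for f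
  proof -
    define d where "d = (\<lambda>x y. ennreal (cmod (f x - f y) powr p))"
    have Sle: "S f \<le> of_nat (card R) * Nf p \<rho> f \<Omega>"
    proof -
      have "Gf p f (A (fst cc)) (A (snd cc)) \<le> Nf p \<rho> f \<Omega>" if "cc \<in> R" for cc
        unfolding Gf_def Nf_def
      proof (intro nn_integral_mono)
        fix x y
        show "indicator (A (fst cc)) x * indicator (A (snd cc)) y * ennreal (cmod (f x - f y) powr p)
            \<le> indicator \<Omega> x * indicator \<Omega> y * indicator (ball x \<rho>) y * ennreal (cmod (f x - f y) powr p)"
          using Rnear[of "fst cc" "snd cc" x y] that by (cases "x \<in> A (fst cc) \<and> y \<in> A (snd cc)") (auto simp: A_def indicator_def)
      qed
      then show ?thesis unfolding S_def by (intro sum_bounded_above) auto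
    qed
    have "Gf p f \<Omega> \<Omega> \<le> (\<integral>\<^sup>+x. \<integral>\<^sup>+y. (\<Sum>a\<in>C. \<Sum>b\<in>C. indicator (A a) x * indicator (A b) y * d x y) \<partial>lborel \<partial>lborel)"
      unfolding Gf_def
    proof (intro nn_integral_mono)
      fix x y
      show "indicator \<Omega> x * indicator \<Omega> y * ennreal (cmod (f x - f y) powr p)
          \<le> (\<Sum>a\<in>C. \<Sum>b\<in>C. indicator (A a) x * indicator (A b) y * d x y)"
      proof (cases "x \<in> \<Omega> \<and> y \<in> \<Omega>")
        case True
        obtain a where a: "a \<in> C" "x \<in> ball a r" using C(3) True by blast
        obtain b where b: "b \<in> C" "y \<in> ball b r" using C(3) True by blast
        have ab: "a \<in> C" "x \<in> A a" "b \<in> C" "y \<in> A b" using a b True by (auto simp: A_def)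
        have "indicator \<Omega> x * indicator \<Omega> y * ennreal (cmod (f x - f y) powr p)
            = indicator (A a) x * indicator (A b) y * d x y" using True ab by (simp add: d_def)
        also have "\<dots> \<le> (\<Sum>b\<in>C. indicator (A a) x * indicator (A b) y * d x y)"
          using member_le_sum[OF ab(3) _ C(2), of "\<lambda>b. indicator (A a) x * indicator (A b) y * d x y"] by simp
        also have "\<dots> \<le> (\<Sum>a\<in>C. \<Sum>b\<in>C. indicator (A a) x * indicator (A b) y * d x y)"
          using member_le_sum[OF ab(1) _ C(2), of "\<lambda>a. \<Sum>b\<in>C. indicator (A a) x * indicator (A b) y * d x y"] by simp
        finally show ?thesis .
      next
        case False
        then show ?thesis by auto
      qed
    qed
    also have "\<dots> = (\<Sum>a\<in>C. \<Sum>b\<in>C. Gf p f (A a) (A b))"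
    proof -
      have "(\<integral>\<^sup>+x. \<integral>\<^sup>+y. (\<Sum>a\<in>C. \<Sum>b\<in>C. indicator (A a) x * indicator (A b) y * d x y) \<partial>lborel \<partial>lborel)
          = (\<integral>\<^sup>+x. (\<Sum>a\<in>C. \<Sum>b\<in>C. \<integral>\<^sup>+y. indicator (A a) x * indicator (A b) y * d x y \<partial>lborel) \<partial>lborel)"
        by (intro nn_integral_cong) (simp add: nn_integral_sum d_def)
      also have "\<dots> = (\<Sum>a\<in>C. \<Sum>b\<in>C. \<integral>\<^sup>+x. \<integral>\<^sup>+y. indicator (A a) x * indicator (A b) y * d x y \<partial>lborel \<partial>lborel)"
        by (simp add: nn_integral_sum d_def)
      finally show ?thesis by (simp add: Gf_def d_def)
    qed
    also have "\<dots> \<le> (\<Sum>a\<in>C. \<Sum>b\<in>C. Bf (a,b) * S f)"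
      using Bf f by (intro sum_mono) auto
    also have "\<dots> = (\<Sum>a\<in>C. \<Sum>b\<in>C. Bf (a,b)) * S f"
      by (simp add: sum_distrib_right)
    also have "(\<Sum>a\<in>C. \<Sum>b\<in>C. Bf (a,b)) * S f \<le> (\<Sum>a\<in>C. \<Sum>b\<in>C. Bf (a,b)) * (of_nat (card R) * Nf p \<rho> f \<Omega>)"
      using Sle by (intro mult_left_mono) auto
    finally show ?thesis by (simp add: K_def mult_ac)
  qed
  ultimately show ?thesis by blast
qed



lemma choose_point:
  fixes f :: "'a::euclidean_space \<Rightarrow> complex"
  assumes f[measurable]: "f \<in> borel_measurable borel" and \<Omega>[measurable]: "\<Omega> \<in> sets borel"
    and pos: "0 < emeasure lborel \<Omega>" and fin: "emeasure lborel \<Omega> < \<infinity>"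
    and G: "Gf p f \<Omega> \<Omega> \<le> T" and T: "T < \<infinity>"
  shows "\<exists>x\<in>\<Omega>. (\<integral>\<^sup>+y. indicator \<Omega> y * ennreal (cmod (f x - f y) powr p) \<partial>lborel) \<le> (T + 1) / emeasure lborel \<Omega>"
proof (rule ccontr)
  assume "\<not> ?thesis"
  then have less: "(T + 1) / emeasure lborel \<Omega> < (\<integral>\<^sup>+y. indicator \<Omega> y * ennreal (cmod (f x - f y) powr p) \<partial>lborel)"
    if "x \<in> \<Omega>" for x using that by (auto simp: not_le)
  have "T + 1 = (\<integral>\<^sup>+x. ((T + 1) / emeasure lborel \<Omega>) * indicator \<Omega> x \<partial>lborel)"
  proof -
    have "(\<integral>\<^sup>+x. ((T + 1) / emeasure lborel \<Omega>) * indicator \<Omega> x \<partial>lborel) = ((T + 1) / emeasure lborel \<Omega>) * emeasure lborel \<Omega>"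
      by (rule nn_integral_cmult_indicator) simp
    also have "\<dots> = (T + 1) * (emeasure lborel \<Omega> / emeasure lborel \<Omega>)"
      by (rule ennreal_divide_times)
    also have "emeasure lborel \<Omega> / emeasure lborel \<Omega> = 1"
      using pos fin by (intro ennreal_divide_self) auto
    finally have "(\<integral>\<^sup>+x. ((T + 1) / emeasure lborel \<Omega>) * indicator \<Omega> x \<partial>lborel) = T + 1" by simp
    then show ?thesis by simp
  qed
  also have "\<dots> \<le> (\<integral>\<^sup>+x. indicator \<Omega> x * (\<integral>\<^sup>+y. indicator \<Omega> y * ennreal (cmod (f x - f y) powr p) \<partial>lborel) \<partial>lborel)"
  proof (intro nn_integral_mono)
    fix x show "(T + 1) / emeasure lborel \<Omega> * indicator \<Omega> x \<le> indicator \<Omega> x * (\<integral>\<^sup>+y. indicator \<Omega> y * ennreal (cmod (f x - f y) powr p) \<partial>lborel)"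
      using less[of x] by (cases "x \<in> \<Omega>") auto
  qed
  also have "\<dots> = Gf p f \<Omega> \<Omega>"
    unfolding Gf_def by (intro nn_integral_cong) (simp add: nn_integral_cmult[symmetric] mult_ac)
  also have "\<dots> \<le> T" by (rule G)
  finally have "T + 1 \<le> T + 0" by simp
  then show False using T by (simp add: ennreal_add_left_cancel_le)
qed


lemma diff_meas_leb:
  fixes g :: "'a::euclidean_space \<Rightarrow> real"
  assumes that: "g \<in> borel_measurable borel"
  shows "(\<lambda>z::'a\<times>'a. g (fst z - snd z)) \<in> borel_measurable lebesgue"
proof -
  have "(\<lambda>z::'a\<times>'a. fst z - snd z) \<in> borel \<rightarrow>\<^sub>M borel"
    by (intro borel_measurable_continuous_onI continuous_intros)
  then have "(\<lambda>z::'a\<times>'a. g (fst z - snd z)) \<in> borel_measurable borel"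
    using measurable_compose[OF _ that] by blast
  then have "(\<lambda>z::'a\<times>'a. g (fst z - snd z)) \<in> borel_measurable lborel" by simp
  then show ?thesis by (rule measurable_completion)
qed

lemma core:
  fixes \<Omega> :: "'a::euclidean_space set" and a :: "'a \<Rightarrow> real" and \<phi> :: "real \<Rightarrow> 'a \<Rightarrow> 'a \<Rightarrow> real"
  assumes \<Omega>: "open \<Omega>" "connected \<Omega>" "bounded \<Omega>" "\<Omega> \<noteq> {}"
    and am: "a \<in> borel_measurable lebesgue"
    and \<rho>: "\<rho> > 0" and c0: "c0 > 0" and aball: "AE z in lebesgue. z \<in> ball 0 \<rho> \<longrightarrow> a z \<ge> c0"
    and \<phi>nn: "\<forall>t\<ge>0. \<forall>x\<in>\<Omega>. \<forall>y\<in>\<Omega>. \<phi> t x y \<ge> 0"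
    and C1: "cond_C1 \<phi> \<Omega>"
    and p: "p > 0"
    and K\<phi>: "K\<phi> > 0" and h\<phi>: "AE z in lebesgue. z \<in> \<Omega> \<times> \<Omega> \<longrightarrow> (\<forall>t\<ge>1. t powr p \<le> K\<phi> * \<phi> t (fst z) (snd z))"
  shows "\<exists>K0::ennreal. K0 < \<infinity> \<and> (\<forall>w\<in>L1loc \<Omega>. Fmod \<phi> a \<Omega> w \<le> 1 \<longrightarrow> (\<exists>c. Lp_integral p \<Omega> (\<lambda>x. w x - c) \<le> K0))"
proof -
  obtain K where K: "K < \<infinity>" "\<And>f. f \<in> borel_measurable borel \<Longrightarrow> Gf p f \<Omega> \<Omega> \<le> K * Nf p \<rho> f \<Omega>"
    using chain[OF \<Omega>(1,2,3) \<rho>, of p] p by auto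
  have "a \<in> borel_measurable (completion lborel)" using am by simp
  then obtain a' where a': "a' \<in> borel_measurable lborel" "AE x in lborel. a x = a' x"
    using completion_ex_borel_measurable_real by blast
  have a'm[measurable]: "a' \<in> borel_measurable borel" using a'(1) by simp
  have a'ae: "AE x in lebesgue. a x = a' x" using a'(2) by (rule AE_completion)
  have \<Omega>m[measurable]: "\<Omega> \<in> sets borel" using \<Omega>(1) by simp
  define \<mu>2 where "\<mu>2 = emeasure (lebesgue :: ('a\<times>'a) measure) (\<Omega> \<times> \<Omega>)"
  have \<mu>2fin: "\<mu>2 < \<infinity>"
  proof -
    have "bounded (\<Omega> \<times> \<Omega>)" using \<Omega>(3) by (simp add: bounded_Times)
    then have "emeasure (lborel :: ('a\<times>'a) measure) (\<Omega> \<times> \<Omega>) < \<infinity>" by (rule emeasure_bounded_finite)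
    moreover have "\<Omega> \<times> \<Omega> \<in> sets (lborel :: ('a\<times>'a) measure)" using \<Omega>(1) by (simp add: open_Times)
    ultimately show ?thesis by (simp add: \<mu>2_def)
  qed
  define K2 where "K2 = ennreal (K\<phi> / c0)"
  define \<mu> where "\<mu> = emeasure lborel \<Omega>"
  have \<mu>pos: "0 < \<mu>"
  proof -
    obtain x where "x \<in> \<Omega>" using \<Omega>(4) by blast
    have "0 < emeasure lborel (\<Omega> \<inter> ball x 1)" using pos_measure_open_piece[OF \<Omega>(1) \<open>x \<in> \<Omega>\<close>] by simp
    also have "\<dots> \<le> \<mu>" unfolding \<mu>_def by (intro emeasure_mono) auto
    finally show ?thesis .
  qed
  have \<mu>fin: "\<mu> < \<infinity>" unfolding \<mu>_def using \<Omega>(3) by (rule emeasure_bounded_finite)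
  define K0 where "K0 = (K * (\<mu>2 + K2) + 1) / \<mu>"
  have "K0 < \<infinity>"
  proof -
    have "K * (\<mu>2 + K2) + 1 < \<infinity>" using K(1) \<mu>2fin by (simp add: K2_def ennreal_mult_less_top)
    then show ?thesis unfolding K0_def using \<mu>pos
      by (metis ennreal_divide_eq_top_iff less_top not_gr_zero infinity_ennreal_def)
  qed
  moreover have "\<exists>c. Lp_integral p \<Omega> (\<lambda>x. w x - c) \<le> K0" if w: "w \<in> L1loc \<Omega>" and Fw: "Fmod \<phi> a \<Omega> w \<le> 1" for w
  proof -
    have wm: "set_borel_measurable lebesgue \<Omega> w" using w by (simp add: L1loc_def)
    obtain w' where w'm[measurable]: "w' \<in> borel_measurable borel" and w'ae0: "AE x in lborel. x \<in> \<Omega> \<longrightarrow> w x = w' x"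
      using borel_version[OF wm] by blast
    have w'ae: "AE x in lebesgue. x \<in> \<Omega> \<longrightarrow> w x = w' x" using w'ae0 by (rule AE_completion)
    define near where "near = {z::'a\<times>'a. dist (fst z) (snd z) < \<rho>}"
    have nearm[measurable]: "near \<in> sets borel"
    proof -
      have "open near" unfolding near_def
        by (intro open_Collect_less continuous_intros)
      then show ?thesis by simp
    qed
    have \<phi>m: "(\<lambda>z. indicator (\<Omega> \<times> \<Omega>) z *\<^sub>R \<phi> (cmod (w (fst z) - w (snd z))) (fst z) (snd z)) \<in> borel_measurable lebesgue"
      using C1 w by (simp add: cond_C1_def set_borel_measurable_def)
    have a'dm: "(\<lambda>z::'a\<times>'a. a' (fst z - snd z)) \<in> borel_measurable lebesgue"
      by (rule diff_meas_leb) (rule a'm)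
    define Phi where "Phi = (\<lambda>z. ennreal ((indicator (\<Omega> \<times> \<Omega>) z *\<^sub>R \<phi> (cmod (w (fst z) - w (snd z))) (fst z) (snd z)) * a' (fst z - snd z)))"
    have Phim: "Phi \<in> borel_measurable lebesgue" unfolding Phi_def using \<phi>m a'dm by measurable
    have PhiF: "(\<integral>\<^sup>+z. Phi z \<partial>lebesgue) = Fmod \<phi> a \<Omega> w"
    proof -
      have "AE z in (lebesgue::('a\<times>'a) measure). a (fst z - snd z) = a' (fst z - snd z)"
        using a'ae by (rule AE_diff)
      then have "AE z in (lebesgue::('a\<times>'a) measure). Phi z = ennreal (\<phi> (cmod (w (fst z) - w (snd z))) (fst z) (snd z) * a (fst z - snd z)) * indicator (\<Omega> \<times> \<Omega>) z"
        by eventually_elim (auto simp: Phi_def indicator_def)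
      then show ?thesis unfolding Fmod_def by (rule nn_integral_cong_AE)
    qed
    have Nf_eq: "Nf p \<rho> w' \<Omega> = (\<integral>\<^sup>+z. indicator (\<Omega> \<times> \<Omega>) z * indicator near z * ennreal (cmod (w (fst z) - w (snd z)) powr p) \<partial>lebesgue)"
    proof -
      have "(\<integral>\<^sup>+z. indicator (\<Omega> \<times> \<Omega>) z * indicator near z * ennreal (cmod (w' (fst z) - w' (snd z)) powr p) \<partial>lebesgue)
          = (\<integral>\<^sup>+x. \<integral>\<^sup>+y. indicator (\<Omega> \<times> \<Omega>) (x,y) * indicator near (x,y) * ennreal (cmod (w' x - w' y) powr p) \<partial>lborel \<partial>lborel)"
      proof -
        have m: "(\<lambda>z::'a\<times>'a. indicator (\<Omega> \<times> \<Omega>) z * indicator near z * ennreal (cmod (w' (fst z) - w' (snd z)) powr p)) \<in> borel_measurable borel"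
        proof -
          have nearm'[measurable]: "near \<in> sets (borel \<Otimes>\<^sub>M borel)" unfolding borel_prod by (rule nearm)
          have "(\<lambda>z::'a\<times>'a. indicator (\<Omega> \<times> \<Omega>) z * indicator near z * ennreal (cmod (w' (fst z) - w' (snd z)) powr p)) \<in> borel_measurable (borel \<Otimes>\<^sub>M borel)"
            by measurable
          then show ?thesis unfolding borel_prod .
        qed
        show ?thesis using lebesgue_prod_nn[OF m] by simp
      qed
      also have "\<dots> = Nf p \<rho> w' \<Omega>" unfolding Nf_def
        by (intro nn_integral_cong) (auto simp: indicator_def near_def dist_commute)
      finally have 1: "(\<integral>\<^sup>+z. indicator (\<Omega> \<times> \<Omega>) z * indicator near z * ennreal (cmod (w' (fst z) - w' (snd z)) powr p) \<partial>lebesgue) = Nf p \<rho> w' \<Omega>" .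
      have "AE z in (lebesgue::('a\<times>'a) measure). fst z \<in> \<Omega> \<longrightarrow> w (fst z) = w' (fst z)"
        using w'ae by (rule AE_fst)
      moreover have "AE z in (lebesgue::('a\<times>'a) measure). snd z \<in> \<Omega> \<longrightarrow> w (snd z) = w' (snd z)"
        using w'ae by (rule AE_snd)
      ultimately have "AE z in (lebesgue::('a\<times>'a) measure). indicator (\<Omega> \<times> \<Omega>) z * indicator near z * ennreal (cmod (w (fst z) - w (snd z)) powr p)
          = indicator (\<Omega> \<times> \<Omega>) z * indicator near z * ennreal (cmod (w' (fst z) - w' (snd z)) powr p)"
        by eventually_elim (auto simp: indicator_def mem_Times_iff)
      then have "(\<integral>\<^sup>+z. indicator (\<Omega> \<times> \<Omega>) z * indicator near z * ennreal (cmod (w (fst z) - w (snd z)) powr p) \<partial>lebesgue)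
          = (\<integral>\<^sup>+z. indicator (\<Omega> \<times> \<Omega>) z * indicator near z * ennreal (cmod (w' (fst z) - w' (snd z)) powr p) \<partial>lebesgue)"
        by (rule nn_integral_cong_AE)
      with 1 show ?thesis by simp
    qed
    have "Nf p \<rho> w' \<Omega> \<le> (\<integral>\<^sup>+z. indicator (\<Omega> \<times> \<Omega>) z + K2 * Phi z \<partial>lebesgue)"
      unfolding Nf_eq
    proof (rule nn_integral_mono_AE)
      have A1: "AE z in (lebesgue::('a\<times>'a) measure). fst z - snd z \<in> ball 0 \<rho> \<longrightarrow> a (fst z - snd z) \<ge> c0"
        using aball by (rule AE_diff)
      have A2: "AE z in (lebesgue::('a\<times>'a) measure). a (fst z - snd z) = a' (fst z - snd z)"
        using a'ae by (rule AE_diff)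
      show "AE z in lebesgue. indicator (\<Omega> \<times> \<Omega>) z * indicator near z * ennreal (cmod (w (fst z) - w (snd z)) powr p)
          \<le> indicator (\<Omega> \<times> \<Omega>) z + K2 * Phi z"
        using A1 A2 h\<phi>
      proof eventually_elim
        case (elim z)
        show ?case
        proof (cases "z \<in> \<Omega> \<times> \<Omega> \<and> z \<in> near")
          case False
          then show ?thesis by (auto simp: indicator_def)
        next
          case True
          define x where "x = fst z"
          define y where "y = snd z"
          define t where "t = cmod (w x - w y)"
          have xy: "x \<in> \<Omega>" "y \<in> \<Omega>" "dist x y < \<rho>" using True by (auto simp: x_def y_def near_def mem_Times_iff)
          have "x - y \<in> ball 0 \<rho>" using xy(3) by (simp add: dist_norm norm_minus_commute)
          then have ac0: "a' (x - y) \<ge> c0" using elim(1,2) by (simp add: x_def y_def)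
          have \<phi>0: "\<phi> t x y \<ge> 0" using \<phi>nn xy by (auto simp: t_def)
          have "ennreal (t powr p) \<le> 1 + ennreal (K\<phi> / c0 * (\<phi> t x y * a' (x - y)))"
          proof (cases "t \<le> 1")
            case True
            then have "t powr p \<le> 1" using p by (intro powr_le1) (auto simp: t_def)
            then have "ennreal (t powr p) \<le> 1" by (simp add: ennreal_le_1)
            then show ?thesis by (meson add_increasing2 zero_le order_trans)
          next
            case False
            have "t powr p \<le> K\<phi> * \<phi> t x y" using elim(3) True False by (auto simp: x_def y_def)
            also have "\<dots> \<le> K\<phi> / c0 * (\<phi> t x y * a' (x - y))"
            proof -
              have "K\<phi> * \<phi> t x y = K\<phi> / c0 * (\<phi> t x y * c0)" using c0 by simp
              also have "\<dots> \<le> K\<phi> / c0 * (\<phi> t x y * a' (x - y))"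
                using ac0 \<phi>0 K\<phi> c0 by (intro mult_left_mono mult_left_mono) auto
              finally show ?thesis .
            qed
            finally have "ennreal (t powr p) \<le> ennreal (K\<phi> / c0 * (\<phi> t x y * a' (x - y)))" by (rule ennreal_leI)
            then show ?thesis by (meson add_increasing zero_le order_trans)
          qed
          moreover have "K2 * Phi z = ennreal (K\<phi> / c0 * (\<phi> t x y * a' (x - y)))"
          proof -
            have "K2 * Phi z = ennreal (K\<phi> / c0) * ennreal (\<phi> t x y * a' (x - y))"
              using True by (simp add: K2_def Phi_def t_def x_def y_def)
            also have "\<dots> = ennreal (K\<phi> / c0 * (\<phi> t x y * a' (x - y)))"
              using K\<phi> c0 by (intro ennreal_mult'[symmetric]) simp
            finally show ?thesis .
          qed
          ultimately show ?thesis using True by (simp add: t_def x_def y_def)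
        qed
      qed
    qed
    also have "\<dots> = \<mu>2 + K2 * (\<integral>\<^sup>+z. Phi z \<partial>lebesgue)"
    proof -
      have "(\<Omega> \<times> \<Omega>) \<in> sets (lebesgue :: ('a\<times>'a) measure)" using \<Omega>(1) by (simp add: open_Times)
      then show ?thesis
        using Phim by (simp add: nn_integral_add nn_integral_cmult \<mu>2_def)
    qed
    also have "\<dots> \<le> \<mu>2 + K2"
    proof -
      have "K2 * (\<integral>\<^sup>+z. Phi z \<partial>lebesgue) \<le> K2 * 1" using Fw PhiF by (intro mult_left_mono) auto
      then show ?thesis by (intro add_left_mono) simp
    qed
    finally have Nb: "Nf p \<rho> w' \<Omega> \<le> \<mu>2 + K2" .
    have "Gf p w' \<Omega> \<Omega> \<le> K * (\<mu>2 + K2)"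
      using K(2)[OF w'm] Nb by (meson mult_left_mono order_trans zero_le)
    moreover have "K * (\<mu>2 + K2) < \<infinity>" using K(1) \<mu>2fin by (simp add: K2_def ennreal_mult_less_top)
    ultimately obtain x0 where x0: "x0 \<in> \<Omega>"
      "(\<integral>\<^sup>+y. indicator \<Omega> y * ennreal (cmod (w' x0 - w' y) powr p) \<partial>lborel) \<le> (K * (\<mu>2 + K2) + 1) / \<mu>"
      using choose_point[OF w'm \<Omega>m, of p "K * (\<mu>2 + K2)"] \<mu>pos \<mu>fin unfolding \<mu>_def by blast
    have "Lp_integral p \<Omega> (\<lambda>x. w x - w' x0) = (\<integral>\<^sup>+y. indicator \<Omega> y * ennreal (cmod (w' x0 - w' y) powr p) \<partial>lebesgue)"
      unfolding Lp_integral_def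
    proof (rule nn_integral_cong_AE)
      show "AE y in lebesgue. ennreal (cmod (w y - w' x0) powr p) * indicator \<Omega> y = indicator \<Omega> y * ennreal (cmod (w' x0 - w' y) powr p)"
        using w'ae by eventually_elim (auto simp: indicator_def norm_minus_commute)
    qed
    also have "\<dots> = (\<integral>\<^sup>+y. indicator \<Omega> y * ennreal (cmod (w' x0 - w' y) powr p) \<partial>lborel)"
      by (rule nn_integral_completion)
    also have "\<dots> \<le> K0" using x0(2) by (simp add: K0_def)
    finally show ?thesis by blast
  qed
  ultimately show ?thesis by blast
qed



lemma pow_meas:
  fixes g :: "'a::euclidean_space \<Rightarrow> complex"
  assumes gm: "set_borel_measurable lebesgue A g" and p: "p > 0"
  shows "(\<lambda>x. ennreal (cmod (g x) powr p) * indicator A x) \<in> borel_measurable lebesgue"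
proof -
  have "(\<lambda>x. ennreal (cmod (indicator A x *\<^sub>R g x) powr p)) \<in> borel_measurable lebesgue"
    using gm unfolding set_borel_measurable_def by measurable
  moreover have "(\<lambda>x. ennreal (cmod (indicator A x *\<^sub>R g x) powr p)) = (\<lambda>x. ennreal (cmod (g x) powr p) * indicator A x)"
    by (auto simp: indicator_def)
  ultimately show ?thesis by metis
qed

lemma pt_bound:
  fixes s t p :: real
  assumes "s \<ge> 0" "t > 0" "p \<ge> 1"
  shows "s \<le> t + t powr (1 - p) * s powr p"
proof (cases "s \<le> t")
  case True
  then show ?thesis using assms by (smt (verit) powr_ge_zero mult_nonneg_nonneg)
next
  case False
  then have st: "s > t" by simp
  have "s powr p = s * s powr (p - 1)" using st assms by (simp add: powr_diff)
  then have "t powr (1 - p) * s powr p = s * (s powr (p - 1) / t powr (p - 1))"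
    using assms by (simp add: powr_diff powr_minus divide_simps)
  also have "s powr (p - 1) / t powr (p - 1) = (s / t) powr (p - 1)"
    using assms st by (simp add: powr_divide)
  also have "(s / t) powr (p - 1) \<ge> 1" using st assms by (intro ge_one_powr_ge_zero) auto
  then have "s \<le> s * (s / t) powr (p - 1)" using st assms
    by (metis mult.right_neutral mult_left_mono order_less_le_trans less_eq_real_def)
  finally show ?thesis using assms by (smt (verit))
qed


lemma nn_bound_t:
  fixes g :: "'a::euclidean_space \<Rightarrow> complex"
  assumes p: "p \<ge> 1" and A: "A \<in> sets lebesgue"
    and gm: "set_borel_measurable lebesgue A g" and t: "t > 0"
  shows "(\<integral>\<^sup>+x. ennreal (cmod (indicator A x *\<^sub>R g x)) \<partial>lebesgue)
     \<le> ennreal t * emeasure lebesgue A + ennreal (t powr (1 - p)) * Lp_integral p A g"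
proof -
  have "(\<integral>\<^sup>+x. ennreal (cmod (indicator A x *\<^sub>R g x)) \<partial>lebesgue)
      \<le> (\<integral>\<^sup>+x. ennreal t * indicator A x + ennreal (t powr (1 - p)) * (ennreal (cmod (g x) powr p) * indicator A x) \<partial>lebesgue)"
  proof (intro nn_integral_mono)
    fix x
    show "ennreal (cmod (indicator A x *\<^sub>R g x)) \<le> ennreal t * indicator A x + ennreal (t powr (1 - p)) * (ennreal (cmod (g x) powr p) * indicator A x)"
    proof (cases "x \<in> A")
      case True
      have "cmod (g x) \<le> t + t powr (1 - p) * cmod (g x) powr p" using pt_bound[OF _ t p] by simp
      then have "ennreal (cmod (g x)) \<le> ennreal (t + t powr (1 - p) * cmod (g x) powr p)" by (rule ennreal_leI)
      also have "\<dots> = ennreal t + ennreal (t powr (1 - p)) * ennreal (cmod (g x) powr p)"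
        using t by (simp add: ennreal_plus ennreal_mult)
      finally show ?thesis using True by simp
    qed simp
  qed
  also have "\<dots> = ennreal t * emeasure lebesgue A + ennreal (t powr (1 - p)) * Lp_integral p A g"
    using A pow_meas[OF gm, of p] p unfolding Lp_integral_def
    by (simp add: nn_integral_add nn_integral_cmult nn_integral_cmult_indicator)
  finally show ?thesis .
qed

lemma set_integrable_Lp:
  fixes g :: "'a::euclidean_space \<Rightarrow> complex"
  assumes p: "p \<ge> 1" and A: "A \<in> sets lebesgue" and fin: "emeasure lebesgue A < \<infinity>"
    and gm: "set_borel_measurable lebesgue A g" and J: "Lp_integral p A g < \<infinity>"
  shows "set_integrable lebesgue A g"
  unfolding set_integrable_def
proof (rule integrableI_bounded)
  show "(\<lambda>x. indicator A x *\<^sub>R g x) \<in> borel_measurable lebesgue" using gm by (simp add: set_borel_measurable_def)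
  have "(\<integral>\<^sup>+x. ennreal (cmod (indicator A x *\<^sub>R g x)) \<partial>lebesgue) \<le> ennreal 1 * emeasure lebesgue A + ennreal (1 powr (1 - p)) * Lp_integral p A g"
    using nn_bound_t[OF p A gm, of 1] by simp
  also have "\<dots> < \<infinity>" using fin J by (simp add: ennreal_mult_less_top)
  finally show "(\<integral>\<^sup>+x. ennreal (norm (indicator A x *\<^sub>R g x)) \<partial>lebesgue) < \<infinity>" by simp
qed

lemma holder1:
  fixes g :: "'a::euclidean_space \<Rightarrow> complex"
  assumes p: "p \<ge> 1" and A: "A \<in> sets lebesgue" and fin: "emeasure lebesgue A < \<infinity>" and pos: "0 < measure lebesgue A"
    and gm: "set_borel_measurable lebesgue A g" and J: "Lp_integral p A g < \<infinity>"
  shows "cmod (LINT x:A|lebesgue. g x) powr p \<le> 2 powr p * measure lebesgue A powr (p - 1) * enn2real (Lp_integral p A g)"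
proof -
  define \<mu> where "\<mu> = measure lebesgue A"
  define I where "I = enn2real (Lp_integral p A g)"
  define X where "X = cmod (LINT x:A|lebesgue. g x)"
  have I0: "I \<ge> 0" by (simp add: I_def)
  have Ieq: "Lp_integral p A g = ennreal I" using J by (simp add: I_def less_top)
  have \<mu>eq: "emeasure lebesgue A = ennreal \<mu>" using fin by (simp add: \<mu>_def emeasure_eq_ennreal_measure less_top)
  have \<mu>pos: "\<mu> > 0" using pos by (simp add: \<mu>_def)
  have integ: "set_integrable lebesgue A g" using set_integrable_Lp[OF p A fin gm J] .
  have bnd: "X \<le> t * \<mu> + t powr (1 - p) * I" if t: "t > 0" for t
  proof -
    have "ennreal X \<le> (\<integral>\<^sup>+x. ennreal (cmod (indicator A x *\<^sub>R g x)) \<partial>lebesgue)"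
      using integ unfolding X_def set_lebesgue_integral_def set_integrable_def
      by (rule integral_norm_bound_ennreal)
    also have "\<dots> \<le> ennreal t * emeasure lebesgue A + ennreal (t powr (1 - p)) * Lp_integral p A g"
      by (rule nn_bound_t[OF p A gm t])
    also have "\<dots> = ennreal (t * \<mu> + t powr (1 - p) * I)"
      using t \<mu>pos I0 by (simp add: Ieq \<mu>eq ennreal_plus ennreal_mult)
    finally have e: "ennreal X \<le> ennreal (t * \<mu> + t powr (1 - p) * I)" .
    have "0 \<le> t * \<mu> + t powr (1 - p) * I" using t \<mu>pos I0 by simp
    with e show ?thesis using ennreal_le_iff by blast
  qed
  have X0: "X \<ge> 0" by (simp add: X_def)
  show ?thesis
  proof (cases "I = 0")
    case True
    have "X \<le> 0"
    proof (rule ccontr)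
      assume "\<not> X \<le> 0"
      then have "X > 0" by simp
      have "X \<le> (X / (2 * \<mu>)) * \<mu> + (X / (2 * \<mu>)) powr (1 - p) * I"
        using bnd[of "X / (2 * \<mu>)"] \<open>X > 0\<close> \<mu>pos by simp
      then have "X \<le> X / 2" using True \<mu>pos by simp
      then show False using \<open>X > 0\<close> by simp
    qed
    then have "X = 0" using X0 by simp
    then show ?thesis using I0 \<mu>pos by (simp add: X_def[symmetric] \<mu>_def[symmetric] I_def[symmetric])
  next
    case False
    then have Ipos: "I > 0" using I0 by simp
    define t where "t = (I / \<mu>) powr (1 / p)"
    have tpos: "t > 0" using Ipos \<mu>pos by (simp add: t_def)
    have tp: "t powr p = I / \<mu>" using Ipos \<mu>pos p by (simp add: t_def powr_powr)
    have "t powr (1 - p) * I = t * \<mu>"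
    proof -
      have "t powr (1 - p) = t / t powr p" using tpos by (simp add: powr_diff)
      then show ?thesis using tp Ipos \<mu>pos by (simp add: field_simps)
    qed
    then have "X \<le> 2 * t * \<mu>" using bnd[OF tpos] by (simp add: mult_ac)
    then have "X powr p \<le> (2 * t * \<mu>) powr p" using X0 p by (intro powr_mono2) auto
    also have "\<dots> = 2 powr p * t powr p * \<mu> powr p" using tpos \<mu>pos by (simp add: powr_mult)
    also have "\<dots> = 2 powr p * \<mu> powr (p - 1) * I"
    proof -
      have "\<mu> powr p = \<mu> powr (p - 1) * \<mu>" using \<mu>pos by (simp add: powr_diff)
      then show ?thesis using tp \<mu>pos by (simp add: field_simps)
    qed
    finally show ?thesis by (simp add: X_def \<mu>_def I_def)
  qed
qed



lemma Lp_integral_const: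
  assumes "A \<in> sets lebesgue"
  shows "Lp_integral p A (\<lambda>_. c) = ennreal (cmod c powr p) * emeasure lebesgue A"
  unfolding Lp_integral_def using assms by (simp add: nn_integral_cmult_indicator)

lemma sbm_const: "A \<in> sets lebesgue \<Longrightarrow> set_borel_measurable lebesgue A (\<lambda>_. c::complex)"
  unfolding set_borel_measurable_def by (intro borel_measurable_scaleR borel_measurable_indicator borel_measurable_const)

lemma sbm_diff_const: "set_borel_measurable lebesgue A u \<Longrightarrow> A \<in> sets lebesgue \<Longrightarrow> set_borel_measurable lebesgue A (\<lambda>x. u x - (c::complex))"
proof -
  assume a: "set_borel_measurable lebesgue A u" "A \<in> sets lebesgue"
  have "(\<lambda>x. indicator A x *\<^sub>R u x - indicator A x *\<^sub>R c) \<in> borel_measurable lebesgue"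
    using a unfolding set_borel_measurable_def by measurable
  then show ?thesis unfolding set_borel_measurable_def by (simp add: scaleR_diff_right)
qed

lemma Lp_pow_tri:
  fixes u :: "'a::euclidean_space \<Rightarrow> complex"
  assumes p: "p > 0" and A: "A \<in> sets lebesgue" and um: "set_borel_measurable lebesgue A u"
  shows "Lp_integral p A (\<lambda>x. u x - b) \<le> ennreal (2 powr p) * (Lp_integral p A (\<lambda>x. u x - c) + ennreal (cmod (c - b) powr p) * emeasure lebesgue A)"
proof -
  have "Lp_integral p A (\<lambda>x. u x - b) \<le> (\<integral>\<^sup>+x. ennreal (2 powr p) * (ennreal (cmod (u x - c) powr p) * indicator A x + ennreal (cmod (c - b) powr p) * indicator A x) \<partial>lebesgue)"
    unfolding Lp_integral_def
  proof (intro nn_integral_mono)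
    fix x
    have "cmod (u x - b) powr p \<le> 2 powr p * (cmod (u x - c) powr p + cmod (c - b) powr p)"
      using pow_tri[of p "u x" b c] p by simp
    then have "ennreal (cmod (u x - b) powr p) \<le> ennreal (2 powr p) * (ennreal (cmod (u x - c) powr p) + ennreal (cmod (c - b) powr p))"
      by (simp add: ennreal_leI ennreal_plus[symmetric] ennreal_mult[symmetric] del: ennreal_plus)
    then show "ennreal (cmod (u x - b) powr p) * indicator A x \<le> ennreal (2 powr p) * (ennreal (cmod (u x - c) powr p) * indicator A x + ennreal (cmod (c - b) powr p) * indicator A x)"
      by (cases "x \<in> A") auto
  qed
  also have "\<dots> = ennreal (2 powr p) * (Lp_integral p A (\<lambda>x. u x - c) + ennreal (cmod (c - b) powr p) * emeasure lebesgue A)"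
    using pow_meas[OF sbm_diff_const[OF um A, of c] p] A unfolding Lp_integral_def
    by (simp add: nn_integral_add nn_integral_cmult nn_integral_cmult_indicator)
  finally show ?thesis .
qed

lemma recenter:
  fixes u :: "'a::euclidean_space \<Rightarrow> complex"
  assumes p: "p \<ge> 1" and A: "A \<in> sets lebesgue" and fin: "emeasure lebesgue A < \<infinity>" and pos: "0 < measure lebesgue A"
    and um: "set_borel_measurable lebesgue A u" and J: "Lp_integral p A (\<lambda>x. u x - c) < \<infinity>"
  shows "set_integrable lebesgue A u" "Lp_integral p A u < \<infinity>"
    "Lp_integral p A (\<lambda>x. u x - mean_val A u) \<le> ennreal (2 powr p * (1 + 2 powr p)) * Lp_integral p A (\<lambda>x. u x - c)"
proof -
  define \<mu> where "\<mu> = measure lebesgue A"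
  have \<mu>eq: "emeasure lebesgue A = ennreal \<mu>" using fin by (simp add: \<mu>_def emeasure_eq_ennreal_measure less_top)
  have \<mu>pos: "\<mu> > 0" using pos by (simp add: \<mu>_def)
  have gm: "set_borel_measurable lebesgue A (\<lambda>x. u x - c)" by (rule sbm_diff_const[OF um A])
  have gi: "set_integrable lebesgue A (\<lambda>x. u x - c)" by (rule set_integrable_Lp[OF p A fin gm J])
  have ci: "set_integrable lebesgue A (\<lambda>_. c)"
    using set_integrable_Lp[OF p A fin sbm_const[OF A], of c] fin by (simp add: Lp_integral_const[OF A] ennreal_mult_less_top)
  have ui: "set_integrable lebesgue A u"
    using set_integral_add(1)[OF gi ci] by simp
  then show "set_integrable lebesgue A u" .
  have "Lp_integral p A (\<lambda>x. u x - 0) \<le> ennreal (2 powr p) * (Lp_integral p A (\<lambda>x. u x - c) + ennreal (cmod (c - 0) powr p) * emeasure lebesgue A)"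
    using Lp_pow_tri[OF _ A um, of p 0 c] p by simp
  also have "\<dots> < \<infinity>" using J fin by (simp add: ennreal_mult_less_top)
  finally show "Lp_integral p A u < \<infinity>" by simp
  define m where "m = mean_val A u"
  have intg: "(LINT x:A|lebesgue. u x - c) = (LINT x:A|lebesgue. u x) - \<mu> * c"
    using set_integral_diff(2)[OF ui ci] set_integral_const[OF A, of c] fin
    by (simp add: \<mu>_def scaleR_conv_of_real)
  have mc: "m - c = complex_of_real (1 / \<mu>) * (LINT x:A|lebesgue. u x - c)"
    using \<mu>pos by (simp add: m_def mean_val_def intg \<mu>_def[symmetric] field_simps)
  have H: "cmod (LINT x:A|lebesgue. u x - c) powr p \<le> 2 powr p * \<mu> powr (p - 1) * enn2real (Lp_integral p A (\<lambda>x. u x - c))"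
    using holder1[OF p A fin pos gm J] by (simp add: \<mu>_def)
  define I where "I = enn2real (Lp_integral p A (\<lambda>x. u x - c))"
  have Ieq: "Lp_integral p A (\<lambda>x. u x - c) = ennreal I" using J by (simp add: I_def less_top)
  have I0: "I \<ge> 0" by (simp add: I_def)
  have cm: "cmod (c - m) powr p * \<mu> \<le> 2 powr p * I"
  proof -
    have "cmod (c - m) = (1 / \<mu>) * cmod (LINT x:A|lebesgue. u x - c)"
    proof -
      have "cmod (c - m) = cmod (m - c)" by (rule norm_minus_commute)
      also have "\<dots> = cmod (complex_of_real (1 / \<mu>)) * cmod (LINT x:A|lebesgue. u x - c)"
        unfolding mc by (rule norm_mult)
      also have "cmod (complex_of_real (1 / \<mu>)) = 1 / \<mu>" using \<mu>pos by (simp only: norm_of_real) simp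
      finally show ?thesis .
    qed
    then have "cmod (c - m) powr p = (1 / \<mu>) powr p * cmod (LINT x:A|lebesgue. u x - c) powr p"
      using \<mu>pos by (simp add: powr_mult[symmetric])
    also have "\<dots> \<le> (1 / \<mu>) powr p * (2 powr p * \<mu> powr (p - 1) * I)"
      using H by (intro mult_left_mono) (auto simp: I_def)
    finally have "cmod (c - m) powr p * \<mu> \<le> (1 / \<mu>) powr p * (2 powr p * \<mu> powr (p - 1) * I) * \<mu>"
      using \<mu>pos by simp
    also have "\<dots> = 2 powr p * I * ((1 / \<mu>) powr p * \<mu> powr (p - 1) * \<mu>)" by (simp add: mult_ac)
    also have "(1 / \<mu>) powr p * \<mu> powr (p - 1) * \<mu> = 1"
      using \<mu>pos by (simp add: powr_divide powr_diff)
    finally show ?thesis by simp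
  qed
  have "Lp_integral p A (\<lambda>x. u x - m) \<le> ennreal (2 powr p) * (Lp_integral p A (\<lambda>x. u x - c) + ennreal (cmod (c - m) powr p) * emeasure lebesgue A)"
    using Lp_pow_tri[OF _ A um, of p m c] p by simp
  also have "\<dots> = ennreal (2 powr p) * (ennreal I + ennreal (cmod (c - m) powr p * \<mu>))"
    using \<mu>pos by (simp add: Ieq \<mu>eq ennreal_mult)
  also have "\<dots> \<le> ennreal (2 powr p) * (ennreal I + ennreal (2 powr p * I))"
    using cm by (intro mult_left_mono add_left_mono ennreal_leI) auto
  also have "\<dots> = ennreal (2 powr p * (1 + 2 powr p)) * ennreal I"
    using I0 by (simp add: ennreal_plus[symmetric] ennreal_mult[symmetric] algebra_simps del: ennreal_plus)
  finally show "Lp_integral p A (\<lambda>x. u x - mean_val A u) \<le> ennreal (2 powr p * (1 + 2 powr p)) * Lp_integral p A (\<lambda>x. u x - c)"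
    by (simp add: Ieq m_def)
qed



lemma Fmod_AE:
  fixes u v :: "'a::euclidean_space \<Rightarrow> complex"
  assumes "AE x in lebesgue. x \<in> \<Omega> \<longrightarrow> v x - u x = c"
  shows "Fmod \<phi> a \<Omega> (\<lambda>x. v x / l) = Fmod \<phi> a \<Omega> (\<lambda>x. u x / l)"
proof -
  have 1: "AE z in (lebesgue::('a\<times>'a) measure). fst z \<in> \<Omega> \<longrightarrow> v (fst z) - u (fst z) = c"
    using assms by (rule AE_fst)
  have 2: "AE z in (lebesgue::('a\<times>'a) measure). snd z \<in> \<Omega> \<longrightarrow> v (snd z) - u (snd z) = c"
    using assms by (rule AE_snd)
  show ?thesis unfolding Fmod_def
  proof (rule nn_integral_cong_AE)
    show "AE z in lebesgue. ennreal (\<phi> (cmod (v (fst z) / l - v (snd z) / l)) (fst z) (snd z) * a (fst z - snd z)) * indicator (\<Omega> \<times> \<Omega>) z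
        = ennreal (\<phi> (cmod (u (fst z) / l - u (snd z) / l)) (fst z) (snd z) * a (fst z - snd z)) * indicator (\<Omega> \<times> \<Omega>) z"
      using 1 2
    proof eventually_elim
      case (elim z)
      show ?case
      proof (cases "z \<in> \<Omega> \<times> \<Omega>")
        case True
        then have "v (fst z) = u (fst z) + c" "v (snd z) = u (snd z) + c" using elim by (auto simp: mem_Times_iff algebra_simps)
        then have "v (fst z) / l - v (snd z) / l = u (fst z) / l - u (snd z) / l"
          by (simp add: diff_divide_distrib[symmetric])
        then show ?thesis by simp
      qed simp
    qed
  qed
qed

lemma pnorm_AE:
  assumes "AE x in lebesgue. x \<in> \<Omega> \<longrightarrow> v x - u x = c"
  shows "pnorm \<phi> a \<Omega> v = pnorm \<phi> a \<Omega> u"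
  unfolding pnorm_def using Fmod_AE[OF assms] by simp

lemma pnorm_nonneg: "pnorm \<phi> a \<Omega> u \<ge> 0"
  unfolding pnorm_def by (rule Inf_greatest) auto

lemma Fmod_const:
  assumes "AE z in lebesgue. z \<in> \<Omega> \<times> \<Omega> \<longrightarrow> \<phi> 0 (fst z) (snd z) = 0"
  shows "Fmod \<phi> a \<Omega> (\<lambda>x. k) = 0"
  unfolding Fmod_def
proof -
  have "AE z in lebesgue. ennreal (\<phi> (cmod (k - k)) (fst z) (snd z) * a (fst z - snd z)) * indicator (\<Omega> \<times> \<Omega>) z = 0"
    using assms by eventually_elim (auto simp: indicator_def mem_Times_iff)
  then show "(\<integral>\<^sup>+z. ennreal (\<phi> (cmod (k - k)) (fst z) (snd z) * a (fst z - snd z)) * indicator (\<Omega> \<times> \<Omega>) z \<partial>lebesgue) = 0"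
    by (subst nn_integral_cong_AE[where v="\<lambda>_. 0"]) simp_all
qed

lemma Inf_pos_ereal: "Inf {ereal l | l. l > 0} = 0"
proof (rule antisym)
  show "Inf {ereal l | l. l > 0} \<le> 0"
    unfolding Inf_le_iff
  proof (intro allI impI)
    fix y :: ereal assume "y > 0"
    then show "\<exists>a\<in>{ereal l | l. l > 0}. y > a"
    proof (cases y)
      case (real r)
      then have r: "r > 0" using \<open>y > 0\<close> by simp
      have "ereal (r/2) \<in> {ereal l | l. l > 0}" using r by (intro CollectI exI[of _ "r/2"]) simp
      moreover have "ereal (r/2) < y" using r real by simp
      ultimately show ?thesis by blast
    next
      case PInf
      then show ?thesis by (intro bexI[of _ "ereal 1"]) auto
    qed (use \<open>y > 0\<close> in auto)
  qed
  show "0 \<le> Inf {ereal l | l. l > 0}" by (rule Inf_greatest) auto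
qed

lemma pnorm_zero:
  assumes "\<And>l. l > 0 \<Longrightarrow> Fmod \<phi> a \<Omega> (\<lambda>x. u x / complex_of_real l) \<le> 1"
  shows "pnorm \<phi> a \<Omega> u = 0"
proof -
  have "{ereal l | l. l > 0 \<and> Fmod \<phi> a \<Omega> (\<lambda>x. u x / complex_of_real l) \<le> 1} = {ereal l | l. l > 0}"
    using assms by auto
  then show ?thesis unfolding pnorm_def using Inf_pos_ereal by simp
qed

lemma pnorm_AE_const:
  assumes C4': "AE z in lebesgue. z \<in> \<Omega> \<times> \<Omega> \<longrightarrow> \<phi> 0 (fst z) (snd z) = 0"
    and "AE x in lebesgue. x \<in> \<Omega> \<longrightarrow> f x = k"
  shows "pnorm \<phi> a \<Omega> f = 0"
proof (rule pnorm_zero)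
  fix l :: real assume "l > 0"
  have "AE x in lebesgue. x \<in> \<Omega> \<longrightarrow> f x - k = 0" using assms(2) by eventually_elim auto
  then have "Fmod \<phi> a \<Omega> (\<lambda>x. f x / complex_of_real l) = Fmod \<phi> a \<Omega> (\<lambda>x. k / complex_of_real l)"
    by (rule Fmod_AE)
  also have "\<dots> = 0" using Fmod_const[where \<phi>=\<phi> and \<Omega>=\<Omega> and a=a and k="k / complex_of_real l"] C4' by simp
  finally show "Fmod \<phi> a \<Omega> (\<lambda>x. f x / complex_of_real l) \<le> 1" by simp
qed

lemma set_integral_cong_AE':
  fixes f g :: "'a::euclidean_space \<Rightarrow> complex"
  assumes "set_borel_measurable lebesgue \<Omega> f" "set_borel_measurable lebesgue \<Omega> g"
    and "AE x in lebesgue. x \<in> \<Omega> \<longrightarrow> f x = g x"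
  shows "(LINT x:\<Omega>|lebesgue. f x) = (LINT x:\<Omega>|lebesgue. g x)"
  unfolding set_lebesgue_integral_def
  using assms(1,2) unfolding set_borel_measurable_def
  by (rule integral_cong_AE) (use assms(3) in \<open>auto elim!: eventually_mono simp: indicator_def\<close>)



lemma open_bounded_facts:
  fixes \<Omega> :: "'a::euclidean_space set"
  assumes "open \<Omega>" "bounded \<Omega>" "\<Omega> \<noteq> {}"
  shows "\<Omega> \<in> sets lebesgue" "emeasure lebesgue \<Omega> < \<infinity>" "0 < measure lebesgue \<Omega>"
proof -
  show "\<Omega> \<in> sets lebesgue" using assms(1) by simp
  show fin: "emeasure lebesgue \<Omega> < \<infinity>" using emeasure_bounded_finite[OF assms(2)] assms(1) by simp
  obtain x where "x \<in> \<Omega>" using assms(3) by blast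
  have "0 < emeasure lborel (\<Omega> \<inter> ball x 1)" using pos_measure_open_piece[OF assms(1) \<open>x \<in> \<Omega>\<close>] by simp
  also have "\<dots> \<le> emeasure lborel \<Omega>" by (intro emeasure_mono) (use assms(1) in auto)
  finally have "0 < emeasure lebesgue \<Omega>" using assms(1) by simp
  then show "0 < measure lebesgue \<Omega>" using fin by (simp add: measure_def enn2real_positive_iff)
qed

lemma sbm_subset:
  fixes u :: "'a::euclidean_space \<Rightarrow> complex"
  assumes "set_borel_measurable lebesgue \<Omega> u" "K \<subseteq> \<Omega>" "K \<in> sets lebesgue"
  shows "set_borel_measurable lebesgue K u"
proof -
  have "(\<lambda>x. indicator K x *\<^sub>R (indicator \<Omega> x *\<^sub>R u x)) \<in> borel_measurable lebesgue"
  proof -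
    have i: "(indicator K :: 'a \<Rightarrow> real) \<in> borel_measurable lebesgue" using assms(3) by simp
    show ?thesis using borel_measurable_scaleR[OF i assms(1)[unfolded set_borel_measurable_def]] .
  qed
  moreover have "(\<lambda>x. indicator K x *\<^sub>R (indicator \<Omega> x *\<^sub>R u x)) = (\<lambda>x. indicator K x *\<^sub>R u x)"
    using assms(2) by (intro ext) (auto simp: indicator_def)
  ultimately show ?thesis unfolding set_borel_measurable_def by simp
qed

lemma compact_facts:
  fixes K :: "'a::euclidean_space set"
  assumes "compact K"
  shows "K \<in> sets lebesgue" "emeasure lebesgue K < \<infinity>"
proof -
  have "closed K" using assms by (rule compact_imp_closed)
  then show "K \<in> sets lebesgue" by simp
  have "bounded K" using assms by (rule compact_imp_bounded)
  then show "emeasure lebesgue K < \<infinity>" using emeasure_bounded_finite \<open>closed K\<close> by simp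
qed

lemma Lploc_L1loc:
  assumes p: "p \<ge> 1" and u: "u \<in> Lploc p \<Omega>"
  shows "u \<in> L1loc \<Omega>"
proof -
  have um: "set_borel_measurable lebesgue \<Omega> u" using u by (simp add: Lploc_def)
  have "set_integrable lebesgue K u" if K: "compact K" "K \<subseteq> \<Omega>" for K
  proof (rule set_integrable_Lp[OF p])
    show "K \<in> sets lebesgue" "emeasure lebesgue K < \<infinity>" using compact_facts[OF K(1)] by auto
    show "set_borel_measurable lebesgue K u" using sbm_subset[OF um K(2)] compact_facts[OF K(1)] by simp
    show "Lp_integral p K u < \<infinity>" using u K by (simp add: Lploc_def Lp_integral_def)
  qed
  then show ?thesis using um by (simp add: L1loc_def)
qed

lemma Lploc_I:
  assumes um: "set_borel_measurable lebesgue \<Omega> u" and J: "Lp_integral p \<Omega> u < \<infinity>"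
  shows "u \<in> Lploc p \<Omega>"
proof -
  have "(\<integral>\<^sup>+x\<in>K. ennreal (cmod (u x) powr p) \<partial>lebesgue) < \<infinity>" if "K \<subseteq> \<Omega>" for K
  proof -
    have "(\<integral>\<^sup>+x\<in>K. ennreal (cmod (u x) powr p) \<partial>lebesgue) \<le> Lp_integral p \<Omega> u"
      unfolding Lp_integral_def using that
      by (intro nn_integral_mono) (auto simp: indicator_def)
    then show ?thesis using J by (simp add: le_less_trans)
  qed
  then show ?thesis using um by (simp add: Lploc_def)
qed

lemma Lspace_iff:
  "u \<in> Lspace \<phi> a \<Omega> pm \<longleftrightarrow> u \<in> Lploc pm \<Omega> \<and> pnorm \<phi> a \<Omega> u < \<infinity> \<and> Lp_integral pm \<Omega> u < \<infinity>"
  by (simp add: Lspace_def)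

lemma Lspace_Lambda_base:
  assumes "pm \<ge> 1" "u \<in> Lspace \<phi> a \<Omega> pm"
  shows "u \<in> Lambda_base \<phi> a \<Omega>"
  using assms Lploc_L1loc by (auto simp: Lspace_def Lambda_base_def)

lemma const_Lspace:
  assumes \<Omega>: "open \<Omega>" "bounded \<Omega>"
    and C4': "AE z in lebesgue. z \<in> \<Omega> \<times> \<Omega> \<longrightarrow> \<phi> 0 (fst z) (snd z) = 0"
  shows "(\<lambda>_. c) \<in> Lspace \<phi> a \<Omega> pm"
proof -
  have Om: "\<Omega> \<in> sets lebesgue" using \<Omega>(1) by simp
  have fin: "emeasure lebesgue \<Omega> < \<infinity>" using emeasure_bounded_finite[OF \<Omega>(2)] \<Omega>(1) by simp
  have J: "Lp_integral pm \<Omega> (\<lambda>_. c) < \<infinity>"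
    using fin by (simp add: Lp_integral_const[OF Om] ennreal_mult_less_top)
  have "pnorm \<phi> a \<Omega> (\<lambda>_. c) = 0" using pnorm_AE_const[where \<phi>=\<phi> and \<Omega>=\<Omega> and a=a and f="\<lambda>_. c" and k=c] C4' by simp
  then show ?thesis using Lploc_I[OF sbm_const[OF Om] J] J by (simp add: Lspace_def)
qed

lemma mean_const:
  assumes "\<Omega> \<in> sets lebesgue" "emeasure lebesgue \<Omega> < \<infinity>" "0 < measure lebesgue \<Omega>"
  shows "mean_val \<Omega> (\<lambda>_. c) = c"
  using assms by (simp add: mean_val_def set_integral_const scaleR_conv_of_real less_top[symmetric])

lemma mean_diff_const:
  assumes "\<Omega> \<in> sets lebesgue" "emeasure lebesgue \<Omega> < \<infinity>" "0 < measure lebesgue \<Omega>"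
    and "set_integrable lebesgue \<Omega> u"
  shows "mean_val \<Omega> (\<lambda>x. u x - c) = mean_val \<Omega> u - c"
proof -
  have ci: "set_integrable lebesgue \<Omega> (\<lambda>_. c)"
    using assms(1,2) unfolding set_integrable_def
    by (intro integrable_scaleR_left integrable_real_indicator) (auto simp: less_top)
  have "(LINT x:\<Omega>|lebesgue. u x - c) = (LINT x:\<Omega>|lebesgue. u x) - (LINT x:\<Omega>|lebesgue. c)"
    using set_integral_diff(2)[OF assms(4) ci] .
  then show ?thesis using mean_const[OF assms(1-3), of c] assms(3)
    by (simp add: mean_val_def right_diff_distrib field_simps)
qed

lemma mean_add:
  assumes "set_integrable lebesgue \<Omega> u" "set_integrable lebesgue \<Omega> v"
  shows "mean_val \<Omega> (\<lambda>x. u x + v x) = mean_val \<Omega> u + mean_val \<Omega> v"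
  using set_integral_add(2)[OF assms] by (simp add: mean_val_def distrib_left)

lemma mean_mult:
  shows "mean_val \<Omega> (\<lambda>x. c * u x) = c * mean_val \<Omega> u"
  by (simp add: mean_val_def)



lemma L1loc_scale:
  fixes u :: "'a::euclidean_space \<Rightarrow> complex"
  assumes u: "u \<in> L1loc \<Omega>"
  shows "(\<lambda>x. u x / k) \<in> L1loc \<Omega>"
proof -
  have um[measurable]: "(\<lambda>x. indicator \<Omega> x *\<^sub>R u x) \<in> borel_measurable lebesgue"
    using u by (simp add: L1loc_def set_borel_measurable_def)
  have "(\<lambda>x. (indicator \<Omega> x *\<^sub>R u x) / k) \<in> borel_measurable lebesgue" by measurable
  moreover have "(\<lambda>x. (indicator \<Omega> x *\<^sub>R u x) / k) = (\<lambda>x. indicator \<Omega> x *\<^sub>R (u x / k))"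
    by (intro ext) (simp add: indicator_def)
  ultimately have "set_borel_measurable lebesgue \<Omega> (\<lambda>x. u x / k)"
    unfolding set_borel_measurable_def by simp
  moreover have "set_integrable lebesgue K (\<lambda>x. u x / k)" if "compact K" "K \<subseteq> \<Omega>" for K
  proof -
    have "set_integrable lebesgue K u" using u that by (simp add: L1loc_def)
    then have "set_integrable lebesgue K (\<lambda>x. (1 / k) * u x)" by (cases "k = 0") auto
    then show ?thesis by simp
  qed
  ultimately show ?thesis by (simp add: L1loc_def)
qed

lemma key:
  fixes \<Omega> :: "'a::euclidean_space set" and a :: "'a \<Rightarrow> real" and \<phi> :: "real \<Rightarrow> 'a \<Rightarrow> 'a \<Rightarrow> real"
  assumes \<Omega>: "open \<Omega>" "connected \<Omega>" "bounded \<Omega>" "\<Omega> \<noteq> {}"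
    and am: "a \<in> borel_measurable lebesgue"
    and \<rho>: "\<rho> > 0" and c0: "c0 > 0" and aball: "AE z in lebesgue. z \<in> ball 0 \<rho> \<longrightarrow> a z \<ge> c0"
    and \<phi>nn: "\<forall>t\<ge>0. \<forall>x\<in>\<Omega>. \<forall>y\<in>\<Omega>. \<phi> t x y \<ge> 0"
    and C1: "cond_C1 \<phi> \<Omega>"
    and p: "p \<ge> 1"
    and K\<phi>: "K\<phi> > 0" and h\<phi>: "AE z in lebesgue. z \<in> \<Omega> \<times> \<Omega> \<longrightarrow> (\<forall>t\<ge>1. t powr p \<le> K\<phi> * \<phi> t (fst z) (snd z))"
  shows "\<exists>CK\<ge>0. \<forall>u\<in>Lambda_base \<phi> a \<Omega>. set_integrable lebesgue \<Omega> u \<and> Lp_integral p \<Omega> u < \<infinity>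
     \<and> Lp_integral p \<Omega> (\<lambda>x. u x - mean_val \<Omega> u) < \<infinity>
     \<and> enn2real (Lp_integral p \<Omega> (\<lambda>x. u x - mean_val \<Omega> u)) \<le> CK * real_of_ereal (pnorm \<phi> a \<Omega> u) powr p"
proof -
  obtain K0 where K0: "K0 < \<infinity>" "\<And>w. w \<in> L1loc \<Omega> \<Longrightarrow> Fmod \<phi> a \<Omega> w \<le> 1 \<Longrightarrow> \<exists>c. Lp_integral p \<Omega> (\<lambda>x. w x - c) \<le> K0"
    using core[OF \<Omega> am \<rho> c0 aball \<phi>nn C1 _ K\<phi> h\<phi>] p by auto
  have Om: "\<Omega> \<in> sets lebesgue" and fin: "emeasure lebesgue \<Omega> < \<infinity>" and pos: "0 < measure lebesgue \<Omega>"
    using open_bounded_facts[OF \<Omega>(1,3,4)] by auto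
  define C2 where "C2 = 2 powr p * (1 + 2 powr p)"
  have C2pos: "C2 > 0" by (simp add: C2_def add_pos_pos)
  define CK where "CK = C2 * enn2real K0"
  have CK0: "CK \<ge> 0" using C2pos by (simp add: CK_def)
  have "\<forall>u\<in>Lambda_base \<phi> a \<Omega>. set_integrable lebesgue \<Omega> u \<and> Lp_integral p \<Omega> u < \<infinity>
     \<and> Lp_integral p \<Omega> (\<lambda>x. u x - mean_val \<Omega> u) < \<infinity>
     \<and> enn2real (Lp_integral p \<Omega> (\<lambda>x. u x - mean_val \<Omega> u)) \<le> CK * real_of_ereal (pnorm \<phi> a \<Omega> u) powr p"
  proof
    fix u assume "u \<in> Lambda_base \<phi> a \<Omega>"
    then have uL: "u \<in> L1loc \<Omega>" and pn: "pnorm \<phi> a \<Omega> u < \<infinity>" by (auto simp: Lambda_base_def)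
    have um: "set_borel_measurable lebesgue \<Omega> u" using uL by (simp add: L1loc_def)
    define S where "S = {l. l > 0 \<and> Fmod \<phi> a \<Omega> (\<lambda>x. u x / complex_of_real l) \<le> 1}"
    have pS: "pnorm \<phi> a \<Omega> u = Inf (ereal ` S)"
      unfolding pnorm_def S_def by (intro arg_cong[where f=Inf]) auto
    have Sne: "S \<noteq> {}"
    proof
      assume "S = {}"
      then have "pnorm \<phi> a \<Omega> u = \<infinity>" using pS by (simp add: top_ereal_def)
      then show False using pn by simp
    qed
    define X where "X = Lp_integral p \<Omega> (\<lambda>x. u x - mean_val \<Omega> u)"
    have per_l: "set_integrable lebesgue \<Omega> u \<and> Lp_integral p \<Omega> u < \<infinity> \<and> X < \<infinity> \<and> enn2real X \<le> CK * l powr p"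
      if l: "l \<in> S" for l
    proof -
      have lpos: "l > 0" using l by (simp add: S_def)
      define w where "w = (\<lambda>x. u x / complex_of_real l)"
      have wL: "w \<in> L1loc \<Omega>" unfolding w_def using uL by (rule L1loc_scale)
      have Fw: "Fmod \<phi> a \<Omega> w \<le> 1" using l by (simp add: S_def w_def)
      obtain c where c: "Lp_integral p \<Omega> (\<lambda>x. w x - c) \<le> K0" using K0(2)[OF wL Fw] by blast
      have wm: "set_borel_measurable lebesgue \<Omega> w" using wL by (simp add: L1loc_def)
      have "Lp_integral p \<Omega> (\<lambda>x. u x - complex_of_real l * c) = (\<integral>\<^sup>+x. ennreal (l powr p) * (ennreal (cmod (w x - c) powr p) * indicator \<Omega> x) \<partial>lebesgue)"
        unfolding Lp_integral_def
      proof (intro nn_integral_cong)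
        fix x
        have "u x - complex_of_real l * c = complex_of_real l * (w x - c)" using lpos by (simp add: w_def field_simps)
        then have "cmod (u x - complex_of_real l * c) = l * cmod (w x - c)" using lpos by (simp add: norm_mult)
        then have "cmod (u x - complex_of_real l * c) powr p = l powr p * cmod (w x - c) powr p"
          using lpos by (simp add: powr_mult)
        then show "ennreal (cmod (u x - complex_of_real l * c) powr p) * indicator \<Omega> x = ennreal (l powr p) * (ennreal (cmod (w x - c) powr p) * indicator \<Omega> x)"
          by (simp add: ennreal_mult mult.assoc)
      qed
      also have "\<dots> = ennreal (l powr p) * Lp_integral p \<Omega> (\<lambda>x. w x - c)"
        unfolding Lp_integral_def using pow_meas[OF sbm_diff_const[OF wm Om, of c], of p] p
        by (simp add: nn_integral_cmult)
      also have "\<dots> \<le> ennreal (l powr p) * K0" using c by (intro mult_left_mono) auto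
      finally have Jl: "Lp_integral p \<Omega> (\<lambda>x. u x - complex_of_real l * c) \<le> ennreal (l powr p) * K0" .
      have Jlfin: "Lp_integral p \<Omega> (\<lambda>x. u x - complex_of_real l * c) < \<infinity>"
        using Jl K0(1) by (simp add: ennreal_mult_less_top le_less_trans)
      note R = recenter[OF p Om fin pos um Jlfin]
      have "X \<le> ennreal C2 * (ennreal (l powr p) * K0)"
        using R(3) Jl unfolding X_def C2_def by (meson mult_left_mono order_trans zero_le)
      also have "\<dots> = ennreal (C2 * l powr p) * K0" using C2pos by (simp add: ennreal_mult mult.assoc)
      finally have XB: "X \<le> ennreal (C2 * l powr p) * K0" .
      have XBfin: "ennreal (C2 * l powr p) * K0 < \<infinity>" using K0(1) by (simp add: ennreal_mult_less_top)
      have "enn2real X \<le> enn2real (ennreal (C2 * l powr p) * K0)"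
        using XB XBfin by (intro enn2real_mono) auto
      also have "\<dots> = CK * l powr p" using C2pos by (simp add: enn2real_mult CK_def)
      finally show ?thesis using R(1,2) XB XBfin by (auto simp: le_less_trans)
    qed
    obtain l0 where "l0 \<in> S" using Sne by blast
    note L0 = per_l[OF this]
    have S0: "\<And>l. l \<in> S \<Longrightarrow> l > 0" by (simp add: S_def)
    have bdd: "bdd_below S" using S0 by (auto intro!: bdd_belowI[of _ 0] less_imp_le)
    have "ereal (Inf S) = Inf (ereal ` S)" using ereal_Inf'[OF bdd Sne] by (simp add: image_image)
    then have pnS: "real_of_ereal (pnorm \<phi> a \<Omega> u) = Inf S" using pS by (metis real_of_ereal.simps(1))
    have "enn2real X \<le> CK * (Inf S) powr p"
    proof (cases "CK = 0")
      case True
      then show ?thesis using L0 by simp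
    next
      case False
      then have CKpos: "CK > 0" using CK0 by simp
      define Y where "Y = (enn2real X / CK) powr (1 / p)"
      have Y0: "Y \<ge> 0" by (simp add: Y_def)
      have "Y \<le> Inf S"
      proof (rule cInf_greatest[OF Sne])
        fix l assume "l \<in> S"
        then have "enn2real X / CK \<le> l powr p" using per_l CKpos by (simp add: divide_simps mult.commute)
        then have "Y \<le> (l powr p) powr (1 / p)" unfolding Y_def using p CKpos by (intro powr_mono2) auto
        also have "\<dots> = l" using p S0[OF \<open>l \<in> S\<close>] by (simp add: powr_powr)
        finally show "Y \<le> l" .
      qed
      then have "Y powr p \<le> (Inf S) powr p" using Y0 p by (intro powr_mono2) auto
      moreover have "Y powr p = enn2real X / CK" using p CKpos by (simp add: Y_def powr_powr)
      ultimately show ?thesis using CKpos by (simp add: divide_simps mult.commute)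
    qed
    then show "set_integrable lebesgue \<Omega> u \<and> Lp_integral p \<Omega> u < \<infinity>
     \<and> Lp_integral p \<Omega> (\<lambda>x. u x - mean_val \<Omega> u) < \<infinity>
     \<and> enn2real (Lp_integral p \<Omega> (\<lambda>x. u x - mean_val \<Omega> u)) \<le> CK * real_of_ereal (pnorm \<phi> a \<Omega> u) powr p"
      using L0 pnS by (simp add: X_def)
  qed
  then show ?thesis using CK0 by blast
qed



lemma Lspace_integrable:
  assumes "pm \<ge> 1" "\<Omega> \<in> sets lebesgue" "emeasure lebesgue \<Omega> < \<infinity>" "u \<in> Lspace \<phi> a \<Omega> pm"
  shows "set_integrable lebesgue \<Omega> u"
  using assms set_integrable_Lp[OF assms(1-3)] by (auto simp: Lspace_def Lploc_def)

lemma mean_bound: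
  assumes p: "pm \<ge> 1" and Om: "\<Omega> \<in> sets lebesgue" and fin: "emeasure lebesgue \<Omega> < \<infinity>" and pos: "0 < measure lebesgue \<Omega>"
    and um: "set_borel_measurable lebesgue \<Omega> u" and J: "Lp_integral pm \<Omega> u < \<infinity>"
  shows "cmod (mean_val \<Omega> u) \<le> ((2 powr pm * measure lebesgue \<Omega> powr (pm - 1)) powr (1 / pm) / measure lebesgue \<Omega>) * Lp_norm pm \<Omega> u"
proof -
  define \<mu> where "\<mu> = measure lebesgue \<Omega>"
  define X where "X = cmod (LINT x:\<Omega>|lebesgue. u x)"
  define B where "B = 2 powr pm * \<mu> powr (pm - 1)"
  define I where "I = enn2real (Lp_integral pm \<Omega> u)"
  have \<mu>pos: "\<mu> > 0" using pos by (simp add: \<mu>_def)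
  have H: "X powr pm \<le> B * I" using holder1[OF p Om fin pos um J] by (simp add: X_def B_def I_def \<mu>_def)
  have X0: "X \<ge> 0" by (simp add: X_def)
  have B0: "B \<ge> 0" by (simp add: B_def)
  have I0: "I \<ge> 0" by (simp add: I_def)
  have "X = (X powr pm) powr (1 / pm)" using p X0 by (simp add: powr_powr)
  also have "\<dots> \<le> (B * I) powr (1 / pm)" using H p X0 by (intro powr_mono2) auto
  also have "\<dots> = B powr (1 / pm) * I powr (1 / pm)" using B0 I0 by (simp add: powr_mult)
  finally have XB: "X \<le> B powr (1 / pm) * Lp_norm pm \<Omega> u" by (simp add: Lp_norm_def I_def)
  have "cmod (mean_val \<Omega> u) = X / \<mu>"
    using \<mu>pos by (simp add: mean_val_def X_def \<mu>_def norm_mult norm_divide)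
  also have "\<dots> \<le> B powr (1 / pm) * Lp_norm pm \<Omega> u / \<mu>" using XB \<mu>pos by (simp add: divide_right_mono)
  finally show ?thesis by (simp add: B_def \<mu>_def)
qed

lemma fnorm_nonneg: "fnorm \<phi> a \<Omega> pm u \<ge> 0"
  unfolding fnorm_def Lp_norm_def using pnorm_nonneg[of \<phi> a \<Omega> u]
  by (simp add: real_of_ereal_pos)

lemma part2:
  fixes \<Omega> :: "'a::euclidean_space set"
  assumes \<Omega>: "open \<Omega>" "bounded \<Omega>" "\<Omega> \<noteq> {}" and p: "pm \<ge> 1"
    and \<psi>0: "\<psi>0 \<in> dual_Lambda \<phi> a \<Omega>"
  shows "(\<lambda>u. \<psi>0 (coset_of \<Omega> u) + k * mean_val \<Omega> u) \<in> dual_L \<phi> a \<Omega> pm"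
proof -
  have Om: "\<Omega> \<in> sets lebesgue" and fin: "emeasure lebesgue \<Omega> < \<infinity>" and pos: "0 < measure lebesgue \<Omega>"
    using open_bounded_facts[OF \<Omega>] by auto
  have add0: "\<And>u v. u \<in> Lambda_base \<phi> a \<Omega> \<Longrightarrow> v \<in> Lambda_base \<phi> a \<Omega> \<Longrightarrow> (\<lambda>x. u x + v x) \<in> Lambda_base \<phi> a \<Omega> \<Longrightarrow>
        \<psi>0 (coset_of \<Omega> (\<lambda>x. u x + v x)) = \<psi>0 (coset_of \<Omega> u) + \<psi>0 (coset_of \<Omega> v)"
    using \<psi>0 by (simp add: dual_Lambda_def)
  have scal0: "\<And>c u. u \<in> Lambda_base \<phi> a \<Omega> \<Longrightarrow> (\<lambda>x. c * u x) \<in> Lambda_base \<phi> a \<Omega> \<Longrightarrow>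
        \<psi>0 (coset_of \<Omega> (\<lambda>x. c * u x)) = c * \<psi>0 (coset_of \<Omega> u)"
    using \<psi>0 by (simp add: dual_Lambda_def)
  obtain C0 where C0: "\<And>u. u \<in> Lambda_base \<phi> a \<Omega> \<Longrightarrow> cmod (\<psi>0 (coset_of \<Omega> u)) \<le> C0 * real_of_ereal (pnorm \<phi> a \<Omega> u)"
    using \<psi>0 unfolding dual_Lambda_def by blast
  define Cm where "Cm = (2 powr pm * measure lebesgue \<Omega> powr (pm - 1)) powr (1 / pm) / measure lebesgue \<Omega>"
  have Cm0: "Cm \<ge> 0" by (simp add: Cm_def)
  have LB: "\<And>u. u \<in> Lspace \<phi> a \<Omega> pm \<Longrightarrow> u \<in> Lambda_base \<phi> a \<Omega>" using Lspace_Lambda_base[OF p] by blast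
  have INT: "\<And>u. u \<in> Lspace \<phi> a \<Omega> pm \<Longrightarrow> set_integrable lebesgue \<Omega> u" using Lspace_integrable[OF p Om fin] by blast
  show ?thesis unfolding dual_L_def
  proof (intro CollectI conjI allI impI)
    fix u v assume u: "u \<in> Lspace \<phi> a \<Omega> pm" and v: "v \<in> Lspace \<phi> a \<Omega> pm" and uv: "(\<lambda>x. u x + v x) \<in> Lspace \<phi> a \<Omega> pm"
    show "\<psi>0 (coset_of \<Omega> (\<lambda>x. u x + v x)) + k * mean_val \<Omega> (\<lambda>x. u x + v x) =
          \<psi>0 (coset_of \<Omega> u) + k * mean_val \<Omega> u + (\<psi>0 (coset_of \<Omega> v) + k * mean_val \<Omega> v)"
      using add0[OF LB[OF u] LB[OF v] LB[OF uv]] mean_add[OF INT[OF u] INT[OF v]] by (simp add: algebra_simps)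
  next
    fix c u assume u: "u \<in> Lspace \<phi> a \<Omega> pm" and cu: "(\<lambda>x. c * u x) \<in> Lspace \<phi> a \<Omega> pm"
    show "\<psi>0 (coset_of \<Omega> (\<lambda>x. c * u x)) + k * mean_val \<Omega> (\<lambda>x. c * u x) = c * (\<psi>0 (coset_of \<Omega> u) + k * mean_val \<Omega> u)"
      using scal0[OF LB[OF u] LB[OF cu]] mean_mult[of \<Omega> c u] by (simp add: algebra_simps)
  next
    show "\<exists>C. \<forall>u\<in>Lspace \<phi> a \<Omega> pm. cmod (\<psi>0 (coset_of \<Omega> u) + k * mean_val \<Omega> u) \<le> C * fnorm \<phi> a \<Omega> pm u"
    proof (intro exI ballI)
      fix u assume u: "u \<in> Lspace \<phi> a \<Omega> pm"
      define pn where "pn = real_of_ereal (pnorm \<phi> a \<Omega> u)"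
      define ln where "ln = Lp_norm pm \<Omega> u"
      have pn0: "pn \<ge> 0" using pnorm_nonneg[of \<phi> a \<Omega> u] by (simp add: pn_def real_of_ereal_pos)
      have ln0: "ln \<ge> 0" by (simp add: ln_def Lp_norm_def)
      have um: "set_borel_measurable lebesgue \<Omega> u" and J: "Lp_integral pm \<Omega> u < \<infinity>"
        using u by (auto simp: Lspace_def Lploc_def)
      have m: "cmod (mean_val \<Omega> u) \<le> Cm * ln"
        using mean_bound[OF p Om fin pos um J] by (simp add: Cm_def ln_def)
      have "cmod (\<psi>0 (coset_of \<Omega> u) + k * mean_val \<Omega> u) \<le> cmod (\<psi>0 (coset_of \<Omega> u)) + cmod k * cmod (mean_val \<Omega> u)"
        using norm_triangle_ineq[of "\<psi>0 (coset_of \<Omega> u)" "k * mean_val \<Omega> u"] by (simp add: norm_mult)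
      also have "\<dots> \<le> max C0 0 * pn + cmod k * (Cm * ln)"
      proof (intro add_mono mult_left_mono)
        have "cmod (\<psi>0 (coset_of \<Omega> u)) \<le> C0 * pn" using C0[OF LB[OF u]] by (simp add: pn_def)
        also have "\<dots> \<le> max C0 0 * pn" using pn0 by (intro mult_right_mono) auto
        finally show "cmod (\<psi>0 (coset_of \<Omega> u)) \<le> max C0 0 * pn" .
      qed (use m in auto)
      also have "\<dots> \<le> (max C0 0 + cmod k * Cm) * (pn + ln)"
        using pn0 ln0 Cm0 by (simp add: algebra_simps add_increasing mult_nonneg_nonneg)
      finally show "cmod (\<psi>0 (coset_of \<Omega> u) + k * mean_val \<Omega> u) \<le> (max C0 0 + cmod k * Cm) * fnorm \<phi> a \<Omega> pm u"
        by (simp add: fnorm_def pn_def ln_def)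
    qed
  qed
qed



lemma part1:
  fixes \<Omega> :: "'a::euclidean_space set" and a :: "'a \<Rightarrow> real" and \<phi> :: "real \<Rightarrow> 'a \<Rightarrow> 'a \<Rightarrow> real"
  assumes \<Omega>: "open \<Omega>" "bounded \<Omega>" "\<Omega> \<noteq> {}" and p: "pm \<ge> 1"
    and C4': "AE z in lebesgue. z \<in> \<Omega> \<times> \<Omega> \<longrightarrow> \<phi> 0 (fst z) (snd z) = 0"
    and keyr: "\<forall>u\<in>Lambda_base \<phi> a \<Omega>. set_integrable lebesgue \<Omega> u \<and> Lp_integral pm \<Omega> u < \<infinity>
     \<and> Lp_integral pm \<Omega> (\<lambda>x. u x - mean_val \<Omega> u) < \<infinity>
     \<and> enn2real (Lp_integral pm \<Omega> (\<lambda>x. u x - mean_val \<Omega> u)) \<le> CK * real_of_ereal (pnorm \<phi> a \<Omega> u) powr pm"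
    and CK0: "CK \<ge> 0"
    and \<psi>: "\<psi> \<in> dual_L \<phi> a \<Omega> pm"
  shows "\<exists>\<psi>0\<in>dual_Lambda \<phi> a \<Omega>. \<exists>k. \<forall>u\<in>Lspace \<phi> a \<Omega> pm. \<psi> u = \<psi>0 (coset_of \<Omega> u) + k * mean_val \<Omega> u"
proof -
  have Om: "\<Omega> \<in> sets lebesgue" and fin: "emeasure lebesgue \<Omega> < \<infinity>" and pos: "0 < measure lebesgue \<Omega>"
    using open_bounded_facts[OF \<Omega>] by auto
  have add: "\<And>u v. u \<in> Lspace \<phi> a \<Omega> pm \<Longrightarrow> v \<in> Lspace \<phi> a \<Omega> pm \<Longrightarrow> (\<lambda>x. u x + v x) \<in> Lspace \<phi> a \<Omega> pm \<Longrightarrow>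
        \<psi> (\<lambda>x. u x + v x) = \<psi> u + \<psi> v"
    using \<psi> by (simp add: dual_L_def)
  have scal: "\<And>c u. u \<in> Lspace \<phi> a \<Omega> pm \<Longrightarrow> (\<lambda>x. c * u x) \<in> Lspace \<phi> a \<Omega> pm \<Longrightarrow> \<psi> (\<lambda>x. c * u x) = c * \<psi> u"
    using \<psi> by (simp add: dual_L_def)
  obtain C where C: "\<And>u. u \<in> Lspace \<phi> a \<Omega> pm \<Longrightarrow> cmod (\<psi> u) \<le> C * fnorm \<phi> a \<Omega> pm u"
    using \<psi> unfolding dual_L_def by blast
  define bar where "bar u = (\<lambda>x. u x - mean_val \<Omega> u)" for u :: "'a \<Rightarrow> complex"
  have LB: "\<And>u. u \<in> Lspace \<phi> a \<Omega> pm \<Longrightarrow> u \<in> Lambda_base \<phi> a \<Omega>" using Lspace_Lambda_base[OF p] by blast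
  have pnbar: "pnorm \<phi> a \<Omega> (bar u) = pnorm \<phi> a \<Omega> u" for u
    unfolding bar_def by (rule pnorm_AE[where c="- mean_val \<Omega> u"]) simp
  have F0: "bar u \<in> Lspace \<phi> a \<Omega> pm" if u: "u \<in> Lambda_base \<phi> a \<Omega>" for u
  proof -
    have um: "set_borel_measurable lebesgue \<Omega> u" using u by (simp add: Lambda_base_def L1loc_def)
    have bm: "set_borel_measurable lebesgue \<Omega> (bar u)" unfolding bar_def by (rule sbm_diff_const[OF um Om])
    have J: "Lp_integral pm \<Omega> (bar u) < \<infinity>" using keyr u by (simp add: bar_def)
    have "pnorm \<phi> a \<Omega> (bar u) < \<infinity>" using pnbar u by (simp add: Lambda_base_def)
    then show ?thesis using Lploc_I[OF bm J] J by (simp add: Lspace_def)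
  qed
  have F1: "\<psi> f = \<psi> g" if f: "f \<in> Lspace \<phi> a \<Omega> pm" and g: "g \<in> Lspace \<phi> a \<Omega> pm"
    and fg: "AE x in lebesgue. x \<in> \<Omega> \<longrightarrow> f x = g x" for f g
  proof -
    define h where "h = (\<lambda>x. f x - g x)"
    have fm: "set_borel_measurable lebesgue \<Omega> f" using f by (simp add: Lspace_def Lploc_def)
    have gm: "set_borel_measurable lebesgue \<Omega> g" using g by (simp add: Lspace_def Lploc_def)
    have hm: "set_borel_measurable lebesgue \<Omega> h"
    proof -
      have "(\<lambda>x. indicator \<Omega> x *\<^sub>R f x - indicator \<Omega> x *\<^sub>R g x) \<in> borel_measurable lebesgue"
        using fm gm unfolding set_borel_measurable_def by (rule borel_measurable_diff)
      then show ?thesis unfolding set_borel_measurable_def h_def by (simp add: scaleR_diff_right)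
    qed
    have h0: "AE x in lebesgue. x \<in> \<Omega> \<longrightarrow> h x = 0" using fg by eventually_elim (simp add: h_def)
    have Jh: "Lp_integral pm \<Omega> h = 0"
      unfolding Lp_integral_def
      by (subst nn_integral_cong_AE[where v="\<lambda>_. 0"]) (use h0 p in \<open>auto elim!: eventually_mono simp: indicator_def\<close>)
    have pnh: "pnorm \<phi> a \<Omega> h = 0"
      using pnorm_AE_const[where \<phi>=\<phi> and \<Omega>=\<Omega> and a=a and f=h and k=0] C4' h0 by simp
    have hL: "h \<in> Lspace \<phi> a \<Omega> pm" using Lploc_I[OF hm] Jh pnh by (simp add: Lspace_def)
    have "fnorm \<phi> a \<Omega> pm h = 0" by (simp add: fnorm_def pnh Lp_norm_def Jh)
    then have "\<psi> h = 0" using C[OF hL] by simp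
    moreover have "(\<lambda>x. g x + h x) = f" by (simp add: h_def)
    ultimately show ?thesis using add[OF g hL] f by simp
  qed
  define \<psi>0 where "\<psi>0 = (\<lambda>S. \<psi> (bar (SOME v. v \<in> Lambda_base \<phi> a \<Omega> \<and> coset_of \<Omega> v = S)))"
  have F2: "\<psi>0 (coset_of \<Omega> u) = \<psi> (bar u)" if u: "u \<in> Lambda_base \<phi> a \<Omega>" for u
  proof -
    define v where "v = (SOME v. v \<in> Lambda_base \<phi> a \<Omega> \<and> coset_of \<Omega> v = coset_of \<Omega> u)"
    have v: "v \<in> Lambda_base \<phi> a \<Omega> \<and> coset_of \<Omega> v = coset_of \<Omega> u"
      unfolding v_def by (rule someI[of _ u]) (use u in simp)
    have uL: "u \<in> L1loc \<Omega>" using u by (simp add: Lambda_base_def)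
    have "u \<in> coset_of \<Omega> u" using uL by (auto simp: coset_of_def intro!: exI[of _ 0])
    then have "u \<in> coset_of \<Omega> v" using v by simp
    then obtain c where c: "AE x in lebesgue. x \<in> \<Omega> \<longrightarrow> u x - v x = c" by (auto simp: coset_of_def)
    have ui: "set_integrable lebesgue \<Omega> u" using keyr u by simp
    have vi: "set_integrable lebesgue \<Omega> v" using keyr v by simp
    have um: "set_borel_measurable lebesgue \<Omega> u" using uL by (simp add: L1loc_def)
    have vm: "set_borel_measurable lebesgue \<Omega> v" using v by (simp add: Lambda_base_def L1loc_def)
    have "(LINT x:\<Omega>|lebesgue. u x - c) = (LINT x:\<Omega>|lebesgue. v x)"
    proof (rule set_integral_cong_AE'[OF sbm_diff_const[OF um Om] vm])
      show "AE x in lebesgue. x \<in> \<Omega> \<longrightarrow> u x - c = v x" using c by eventually_elim (auto simp: algebra_simps)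
    qed
    then have "mean_val \<Omega> (\<lambda>x. u x - c) = mean_val \<Omega> v" by (simp add: mean_val_def)
    then have mv: "mean_val \<Omega> v = mean_val \<Omega> u - c" using mean_diff_const[OF Om fin pos ui] by simp
    have "AE x in lebesgue. x \<in> \<Omega> \<longrightarrow> bar v x = bar u x"
      using c
    proof eventually_elim
      case (elim x)
      show ?case
      proof
        assume "x \<in> \<Omega>"
        then have e: "u x - v x = c" using elim by blast
        have "v x = u x - (u x - v x)" by simp
        then have "v x = u x - c" by (simp only: e)
        then show "bar v x = bar u x" by (simp add: bar_def mv)
      qed
    qed
    then have "\<psi> (bar v) = \<psi> (bar u)" by (rule F1[OF F0[OF conjunct1[OF v]] F0[OF u]])
    then show ?thesis by (simp add: \<psi>0_def v_def)
  qed
  define k where "k = \<psi> (\<lambda>_. 1)"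
  have constL: "(\<lambda>_. c) \<in> Lspace \<phi> a \<Omega> pm" for c using const_Lspace[where \<phi>=\<phi> and \<Omega>=\<Omega> and a=a and pm=pm and c=c] \<Omega> C4' by blast
  have rep: "\<psi> u = \<psi>0 (coset_of \<Omega> u) + k * mean_val \<Omega> u" if u: "u \<in> Lspace \<phi> a \<Omega> pm" for u
  proof -
    define m where "m = mean_val \<Omega> u"
    have e: "(\<lambda>x. bar u x + (\<lambda>_. m) x) = u" by (simp add: bar_def m_def)
    have "\<psi> u = \<psi> (\<lambda>x. bar u x + (\<lambda>_. m) x)" using e by simp
    also have "\<dots> = \<psi> (bar u) + \<psi> (\<lambda>_. m)"
      using add[OF F0[OF LB[OF u]] constL[of m]] u e by simp
    also have "\<psi> (\<lambda>_. m) = \<psi> (\<lambda>x. m * (\<lambda>_. 1) x)" by simp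
    also have "\<dots> = m * k" using scal[OF constL[of 1] constL[of "m * 1"]] by (simp add: k_def)
    finally show ?thesis using F2[OF LB[OF u]] by (simp add: m_def mult.commute)
  qed
  have "\<psi>0 \<in> dual_Lambda \<phi> a \<Omega>"
    unfolding dual_Lambda_def
  proof (intro CollectI conjI allI impI)
    fix u v assume u: "u \<in> Lambda_base \<phi> a \<Omega>" and v: "v \<in> Lambda_base \<phi> a \<Omega>" and uv: "(\<lambda>x. u x + v x) \<in> Lambda_base \<phi> a \<Omega>"
    have ui: "set_integrable lebesgue \<Omega> u" using keyr u by simp
    have vi: "set_integrable lebesgue \<Omega> v" using keyr v by simp
    have eq: "bar (\<lambda>x. u x + v x) = (\<lambda>x. bar u x + bar v x)"
      using mean_add[OF ui vi] by (simp add: bar_def algebra_simps)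
    have "\<psi> (bar (\<lambda>x. u x + v x)) = \<psi> (bar u) + \<psi> (bar v)"
      using add[OF F0[OF u] F0[OF v]] F0[OF uv] eq by simp
    then show "\<psi>0 (coset_of \<Omega> (\<lambda>x. u x + v x)) = \<psi>0 (coset_of \<Omega> u) + \<psi>0 (coset_of \<Omega> v)"
      using F2[OF u] F2[OF v] F2[OF uv] by simp
  next
    fix c u assume u: "u \<in> Lambda_base \<phi> a \<Omega>" and cu: "(\<lambda>x. c * u x) \<in> Lambda_base \<phi> a \<Omega>"
    have eq: "bar (\<lambda>x. c * u x) = (\<lambda>x. c * bar u x)"
      by (simp add: bar_def mean_mult algebra_simps)
    have "\<psi> (bar (\<lambda>x. c * u x)) = c * \<psi> (bar u)"
      using scal[OF F0[OF u]] F0[OF cu] eq by simp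
    then show "\<psi>0 (coset_of \<Omega> (\<lambda>x. c * u x)) = c * \<psi>0 (coset_of \<Omega> u)"
      using F2[OF u] F2[OF cu] by simp
  next
    show "\<exists>C. \<forall>u\<in>Lambda_base \<phi> a \<Omega>. cmod (\<psi>0 (coset_of \<Omega> u)) \<le> C * real_of_ereal (pnorm \<phi> a \<Omega> u)"
    proof (intro exI ballI)
      fix u assume u: "u \<in> Lambda_base \<phi> a \<Omega>"
      define pn where "pn = real_of_ereal (pnorm \<phi> a \<Omega> u)"
      have pn0: "pn \<ge> 0" using pnorm_nonneg[of \<phi> a \<Omega> u] by (simp add: pn_def real_of_ereal_pos)
      have X: "enn2real (Lp_integral pm \<Omega> (bar u)) \<le> CK * pn powr pm" using keyr u by (simp add: bar_def pn_def)
      have "Lp_norm pm \<Omega> (bar u) = enn2real (Lp_integral pm \<Omega> (bar u)) powr (1 / pm)" by (simp add: Lp_norm_def)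
      also have "\<dots> \<le> (CK * pn powr pm) powr (1 / pm)" using X p by (intro powr_mono2) auto
      also have "\<dots> = CK powr (1 / pm) * pn" using CK0 pn0 p by (simp add: powr_mult powr_powr)
      finally have ln: "Lp_norm pm \<Omega> (bar u) \<le> CK powr (1 / pm) * pn" .
      have "cmod (\<psi>0 (coset_of \<Omega> u)) = cmod (\<psi> (bar u))" using F2[OF u] by simp
      also have "\<dots> \<le> C * fnorm \<phi> a \<Omega> pm (bar u)" by (rule C[OF F0[OF u]])
      also have "\<dots> \<le> max C 0 * fnorm \<phi> a \<Omega> pm (bar u)" using fnorm_nonneg by (intro mult_right_mono) auto
      also have "\<dots> \<le> max C 0 * (pn + CK powr (1 / pm) * pn)"
        using ln by (intro mult_left_mono) (auto simp: fnorm_def pnbar pn_def)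
      also have "\<dots> = (max C 0 * (1 + CK powr (1 / pm))) * pn" by (simp add: algebra_simps)
      finally show "cmod (\<psi>0 (coset_of \<Omega> u)) \<le> (max C 0 * (1 + CK powr (1 / pm))) * real_of_ereal (pnorm \<phi> a \<Omega> u)"
        by (simp add: pn_def)
    qed
  qed
  then show ?thesis using rep by blast
qed



theorem theorem2p8:
  fixes \<Omega> :: "'a::euclidean_space set"
    and a :: "'a \<Rightarrow> real"
    and \<phi> :: "real \<Rightarrow> 'a \<Rightarrow> 'a \<Rightarrow> real"
    and pm pp \<beta> :: real
  assumes a_L1: "integrable lebesgue a"
    and a_nonneg: "AE z in lebesgue. a z \<ge> 0"
    and a_ball: "\<exists>\<rho>>0. \<exists>c0>0. AE z in lebesgue. z \<in> ball 0 \<rho> \<longrightarrow> a z \<ge> c0"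
    and \<phi>_nonneg: "\<forall>t\<ge>0. \<forall>x\<in>\<Omega>. \<forall>y\<in>\<Omega>. \<phi> t x y \<ge> 0"
    and C1: "cond_C1 \<phi> \<Omega>"
    and C2: "cond_C2 \<phi> \<Omega>"
    and C3: "cond_C3 \<phi> \<Omega> pm pp \<beta>"
    and C4: "cond_C4 \<phi> \<Omega>"
    and domain: "open \<Omega>" "connected \<Omega>" "\<Omega> \<noteq> {}"
    and bdd: "bounded \<Omega>"
    and lip: "lipschitz_boundary \<Omega>"
  shows "(\<forall>\<psi> \<in> dual_L \<phi> a \<Omega> pm. \<exists>\<psi>0 \<in> dual_Lambda \<phi> a \<Omega>. \<exists>k::complex.
            \<forall>u \<in> Lspace \<phi> a \<Omega> pm. \<psi> u = \<psi>0 (coset_of \<Omega> u) + k * mean_val \<Omega> u)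
       \<and> (\<forall>\<psi>0 \<in> dual_Lambda \<phi> a \<Omega>. \<forall>k::complex.
            (\<lambda>u. \<psi>0 (coset_of \<Omega> u) + k * mean_val \<Omega> u) \<in> dual_L \<phi> a \<Omega> pm)"
proof -
  have p1: "1 < pm" and \<beta>1: "\<beta> \<ge> 1"
    and C3ae: "AE z in lebesgue. z \<in> \<Omega> \<times> \<Omega> \<longrightarrow>
        almost_increasing \<beta> (\<lambda>t. \<phi> t (fst z) (snd z) / t powr pm)"
    using C3 by (auto simp: cond_C3_def elim!: eventually_mono)
  have p: "pm \<ge> 1" using p1 by simp
  obtain c1 where c1: "c1 > 0" and C4ae: "AE z in lebesgue. z \<in> \<Omega> \<times> \<Omega> \<longrightarrow>
        inverse c1 \<le> \<phi> 1 (fst z) (snd z) \<and> \<phi> 1 (fst z) (snd z) \<le> c1 \<and>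
        \<phi> 0 (fst z) (snd z) = 0 \<and> (\<forall>t>0. \<phi> t (fst z) (snd z) > 0)"
    using C4 unfolding cond_C4_def by blast
  have C4': "AE z in lebesgue. z \<in> \<Omega> \<times> \<Omega> \<longrightarrow> \<phi> 0 (fst z) (snd z) = 0"
    using C4ae by eventually_elim auto
  have h\<phi>: "AE z in lebesgue. z \<in> \<Omega> \<times> \<Omega> \<longrightarrow> (\<forall>t\<ge>1. t powr pm \<le> (\<beta> * c1) * \<phi> t (fst z) (snd z))"
    using C3ae C4ae
  proof eventually_elim
    case (elim z)
    show ?case
    proof (intro impI allI)
      fix t :: real assume z: "z \<in> \<Omega> \<times> \<Omega>" and t: "t \<ge> 1"
      have ai: "\<phi> 1 (fst z) (snd z) / 1 powr pm \<le> \<beta> * (\<phi> t (fst z) (snd z) / t powr pm)"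
      proof -
        have "\<forall>s t. 0 < s \<longrightarrow> s \<le> t \<longrightarrow> \<phi> s (fst z) (snd z) / s powr pm \<le> \<beta> * (\<phi> t (fst z) (snd z) / t powr pm)"
          using elim(1) z unfolding almost_increasing_def by blast
        then show ?thesis using t by (metis zero_less_one)
      qed
      have tp: "t powr pm > 0" using t by simp
      have i: "inverse c1 \<le> \<phi> 1 (fst z) (snd z)" using elim(2) z by auto
      have "t powr pm * inverse c1 \<le> t powr pm * \<phi> 1 (fst z) (snd z)" using i tp by simp
      also have "\<dots> \<le> \<beta> * \<phi> t (fst z) (snd z)" using ai tp by (simp add: field_simps)
      finally have "t powr pm * inverse c1 \<le> \<beta> * \<phi> t (fst z) (snd z)" .
      then have "t powr pm \<le> c1 * (\<beta> * \<phi> t (fst z) (snd z))" using c1 by (simp add: field_simps)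
      then show "t powr pm \<le> (\<beta> * c1) * \<phi> t (fst z) (snd z)" by (simp add: mult_ac)
    qed
  qed
  obtain \<rho> c0 where \<rho>: "\<rho> > 0" and c0: "c0 > 0" and aball: "AE z in lebesgue. z \<in> ball 0 \<rho> \<longrightarrow> a z \<ge> c0"
    using a_ball by blast
  have am: "a \<in> borel_measurable lebesgue" using a_L1 by (rule borel_measurable_integrable)
  have K\<phi>: "\<beta> * c1 > 0" using \<beta>1 c1 by simp
  obtain CK where CK0: "CK \<ge> 0" and keyr: "\<forall>u\<in>Lambda_base \<phi> a \<Omega>. set_integrable lebesgue \<Omega> u \<and> Lp_integral pm \<Omega> u < \<infinity>
     \<and> Lp_integral pm \<Omega> (\<lambda>x. u x - mean_val \<Omega> u) < \<infinity>
     \<and> enn2real (Lp_integral pm \<Omega> (\<lambda>x. u x - mean_val \<Omega> u)) \<le> CK * real_of_ereal (pnorm \<phi> a \<Omega> u) powr pm"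
    using key[OF domain(1,2) bdd domain(3) am \<rho> c0 aball \<phi>_nonneg C1 p K\<phi> h\<phi>] by blast
  show ?thesis
  proof
    show "\<forall>\<psi> \<in> dual_L \<phi> a \<Omega> pm. \<exists>\<psi>0 \<in> dual_Lambda \<phi> a \<Omega>. \<exists>k::complex.
            \<forall>u \<in> Lspace \<phi> a \<Omega> pm. \<psi> u = \<psi>0 (coset_of \<Omega> u) + k * mean_val \<Omega> u"
      using part1[OF domain(1) bdd domain(3) p C4' keyr CK0] by blast
    show "\<forall>\<psi>0 \<in> dual_Lambda \<phi> a \<Omega>. \<forall>k::complex.
            (\<lambda>u. \<psi>0 (coset_of \<Omega> u) + k * mean_val \<Omega> u) \<in> dual_L \<phi> a \<Omega> pm"
      using part2[OF domain(1) bdd domain(3) p] by blast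
  qed
qed


end
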